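(* Let $N\ge 2$ be an integer, $W>0$, $\sigma>0$, $\sigma_{\rm I}>0$ and $\gamma>0$. For $k=2,\dots,N$ let $\mu_k=J_0\!\left(\frac{2\pi(k-1)}{N-1}W\right)$, where $J_0$ is the zero-order Bessel function of the first kind. Let $x_0,x_1,\dots,x_N,y_0,y_1,\dots,y_N,x_0^{\rm I},x_1^{\rm I},\dots,x_N^{\rm I},y_0^{\rm I},y_1^{\rm I},\dots,y_N^{\rm I}$ be mutually independent real Gaussian random variables, each with mean $0$ and variance $\tfrac12$. Define the complex random variables $$g_1=\sigma x_0+j\sigma y_0,\qquad g_k=\sigma\Big(\sqrt{1-\mu_k^2}\,x_k+\mu_k x_0\Big)+j\sigma\Big(\sqrt{1-\mu_k^2}\,y_k+\mu_k y_0\Big),\ k=2,\dots,N,$$ $$g_1^{\rm I}=\sigma_{\rm I} x_0^{\rm I}+j\sigma_{\rm I} y_0^{\rm I},\qquad g_k^{\rm I}=\sigma_{\rm I}\Big(\sqrt{1-\mu_k^2}\,x_k^{\rm I}+\mu_k x_0^{\rm I}\Big)+j\sigma_{\rm I}\Big(\sqrt{1-\mu_k^2}\,y_k^{\rm I}+\mu_k y_0^{\rm I}\Big),\ k=2,\dots,N,$$ and let ${\rm SIR}=\max_{1\le k\le N}\frac{|g_k|^2}{|g_k^{\rm I}|^2}$. Write $a=\frac{\sigma_{\rm I}^2\gamma}{\sigma^2}$. Then $$\Pr({\rm SIR}\le\gamma)\le\int_0^\infty e^{-z}\left(1-e^{-a z}\right)\prod_{k=2}^N\left[1-\frac{1}{a+1}\cdot\frac{e^{-\frac{1}{a+1}\frac{\mu_k^2}{1-\mu_k^2}\,a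 z}}{1+\frac{4}{a+1}\frac{\mu_k^2}{1-\mu_k^2}\,a z}\right]dz.$$
   Context: This models a receiver with a "fluid antenna" that can be placed at one of $N$ ports evenly spaced over a length $W\lambda$ ($\lambda$ the wavelength); $g_k$ is the desired-signal channel and $g_k^{\rm I}$ the aggregate interference channel at port $k$, and the receiver selects the port maximizing the signal-to-interference ratio. *)

theory Defs
  imports "HOL-Probability.Probability"
begin

definition besselJ0 :: "real \<Rightarrow> real" where
  "besselJ0 x = (\<Sum>m. (-1) ^ m * (x / 2) ^ (2 * m) / (fact m) ^ 2)"

definition fa_mu :: "nat \<Rightarrow> real \<Rightarrow> nat \<Rightarrow> real" where
  "fa_mu N W k = besselJ0 (2 * pi * real (k - 1) / real (N - 1) * W)"

text \<open>Channel at port k built from real parts xs and imaginary parts ys (index 0 = common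
  component), scale s.\<close>
definition fa_chan :: "nat \<Rightarrow> real \<Rightarrow> real \<Rightarrow> (nat \<Rightarrow> real) \<Rightarrow> (nat \<Rightarrow> real) \<Rightarrow> nat \<Rightarrow> complex" where
  "fa_chan N W s xs ys k =
     (if k = 1 then Complex (s * xs 0) (s * ys 0)
      else Complex (s * (sqrt (1 - (fa_mu N W k)\<^sup>2) * xs k + fa_mu N W k * xs 0))
                   (s * (sqrt (1 - (fa_mu N W k)\<^sup>2) * ys k + fa_mu N W k * ys 0)))"

end

theory Submission
  imports Defs "HOL-Probability.Probability"
begin

definition bb :: "nat \<Rightarrow> real" where "bb n = (-1)^n / (fact n)^2"
definition d1 :: "nat \<Rightarrow> real" where "d1 n = (-1)^(n+1) / (fact n * fact (n+1))"
definition d2 :: "nat \<Rightarrow> real" where "d2 n = (-1)^n / (fact n * fact (n+2))"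

lemma summable_fact_bound:
  fixes c :: "nat \<Rightarrow> real" and y :: real
  assumes "\<And>n. \<bar>c n\<bar> \<le> 1 / fact n"
  shows "summable (\<lambda>n. c n * y ^ n)"
proof (rule summable_comparison_test[of _ "\<lambda>n. inverse (fact n :: real) * \<bar>y\<bar> ^ n"])
  show "\<exists>N. \<forall>n\<ge>N. norm (c n * y ^ n) \<le> inverse (fact n) * \<bar>y\<bar> ^ n"
    using assms by (auto simp: abs_mult power_abs divide_inverse intro!: mult_right_mono)
  show "summable (\<lambda>n. inverse (fact n) * \<bar>y\<bar> ^ n)" by (rule summable_exp)
qed

lemma fact_ge1: "(1::real) \<le> fact n" by simp

lemma bb_bound: "\<bar>bb n\<bar> \<le> 1 / fact n"
proof -
  have "\<bar>bb n\<bar> = 1 / (fact n * fact n)" by (simp add: bb_def power2_eq_square abs_mult)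
  also have "\<dots> \<le> 1 / fact n"
    using fact_ge1[of n] by (intro divide_left_mono) (auto simp: mult_le_cancel_left1)
  finally show ?thesis .
qed

lemma d1_bound: "\<bar>d1 n\<bar> \<le> 1 / fact n"
proof -
  have "\<bar>d1 n\<bar> = 1 / (fact n * fact (n+1))" by (simp add: d1_def abs_mult)
  also have "\<dots> \<le> 1 / fact n"
    using fact_ge1[of "n+1"] fact_ge1[of n] by (intro divide_left_mono) (auto simp: mult_le_cancel_left1 simp del: fact_Suc)
  finally show ?thesis .
qed

lemma d2_bound: "\<bar>d2 n\<bar> \<le> 1 / fact n"
proof -
  have "\<bar>d2 n\<bar> = 1 / (fact n * fact (n+2))" by (simp add: d2_def abs_mult)
  also have "\<dots> \<le> 1 / fact n"
    using fact_ge1[of "n+2"] fact_ge1[of n] by (intro divide_left_mono) (auto simp: mult_le_cancel_left1 simp del: fact_Suc)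
  finally show ?thesis .
qed

lemma fs1: "fact (Suc n) = (real n + 1) * (fact n :: real)" by (simp add: fact_Suc)
lemma fs2: "fact (Suc (Suc n)) = (real n + 2) * ((real n + 1) * (fact n :: real))" by (simp add: fact_Suc algebra_simps)

lemma alg1: "(f::real) > 0 \<Longrightarrow> (m::real) \<ge> 0 \<Longrightarrow>
   (m + 1) * (- s / ((m+1) * f)^2) = - s / (f * ((m+1) * f))"
proof -
  assume "f > 0" "m \<ge> 0"
  moreover obtain p where "p = m + 1" by blast
  ultimately have "p \<noteq> 0" "f \<noteq> 0" "m + 1 = p" by auto
  then show ?thesis by (simp add: field_simps power2_eq_square)
qed
lemma alg2: "(f::real) > 0 \<Longrightarrow> (m::real) \<ge> 0 \<Longrightarrow>
   (m + 1) * (s / (((m+1) * f) * ((m+2) * ((m+1) * f)))) = s / (f * ((m+2) * ((m+1) * f)))"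
proof -
  assume "f > 0" "m \<ge> 0"
  moreover obtain p q where "p = m + 1" "q = m + 2" by blast
  ultimately have "p \<noteq> 0" "q \<noteq> 0" "f \<noteq> 0" "m + 1 = p" "m + 2 = q" by auto
  then show ?thesis by (simp add: field_simps power2_eq_square)
qed
lemma alg3':
  assumes h: "p \<noteq> 0" "q \<noteq> 0" "(f::real) \<noteq> 0" and hq: "q = p + 1"
  shows "s / (f * (q * (p * f))) + s / ((p * f) * (q * (p * f))) + (- s) / (p * f)^2 = 0"
proof -
  have "s / (f * (q * (p * f))) + s / ((p * f) * (q * (p * f))) + (- s) / (p * f)^2
     = (s * p + s - s * q) / (f*f*p*p*q)" using h by (simp add: field_simps power2_eq_square)
  also have "s * p + s - s * q = 0" using hq by (simp add: algebra_simps)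
  finally show ?thesis by simp
qed
lemma alg3: "(f::real) > 0 \<Longrightarrow> (m::real) \<ge> 0 \<Longrightarrow>
   s / (f * ((m+2) * ((m+1) * f))) + s / (((m+1) * f) * ((m+2) * ((m+1) * f))) + (- s) / ((m+1) * f)^2 = 0"
  by (rule alg3'[of "m+1" "m+2"]) auto

lemma diffs_bb: "diffs bb = d1"
proof
  fix n
  show "diffs bb n = d1 n"
    unfolding diffs_def bb_def d1_def using alg1[of "fact n" "real n" "(-1)^n"]
    by (simp only: fs1 power_Suc Suc_eq_plus1[symmetric] of_nat_Suc) (simp add: algebra_simps)
qed

lemma diffs_d1: "diffs d1 = d2"
proof
  fix n
  show "diffs d1 n = d2 n"
    unfolding diffs_def d1_def d2_def using alg2[of "fact n" "real n" "(-1)^n"]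
    by (simp only: fs1 fs2 power_Suc Suc_eq_plus1[symmetric] of_nat_Suc numeral_2_eq_2 add_Suc_right add_0_right)
       (simp add: algebra_simps mult.commute[of 2] add.commute)
qed

definition FF :: "real \<Rightarrow> real" where "FF y = (\<Sum>n. bb n * y ^ n)"
definition FF1 :: "real \<Rightarrow> real" where "FF1 y = (\<Sum>n. d1 n * y ^ n)"
definition FF2 :: "real \<Rightarrow> real" where "FF2 y = (\<Sum>n. d2 n * y ^ n)"

lemma sum_bb: "summable (\<lambda>n. bb n * y ^ n)" by (rule summable_fact_bound[OF bb_bound])
lemma sum_d1: "summable (\<lambda>n. d1 n * y ^ n)" by (rule summable_fact_bound[OF d1_bound])
lemma sum_d2: "summable (\<lambda>n. d2 n * y ^ n)" by (rule summable_fact_bound[OF d2_bound])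

lemma FF_deriv: "(FF has_real_derivative FF1 y) (at y)"
  unfolding FF_def FF1_def using termdiffs_strong_converges_everywhere[OF sum_bb]
  by (simp add: diffs_bb)

lemma FF1_deriv: "(FF1 has_real_derivative FF2 y) (at y)"
  unfolding FF1_def FF2_def using termdiffs_strong_converges_everywhere[OF sum_d1]
  by (simp add: diffs_d1)

lemma coeff_ode: "d2 n + d1 (n+1) + bb (n+1) = 0"
  unfolding d2_def d1_def bb_def using alg3[of "fact n" "real n" "(-1)^n"]
  by (simp only: fs1 fs2 power_Suc Suc_eq_plus1[symmetric] of_nat_Suc numeral_2_eq_2 add_Suc_right add_0_right)
     (simp add: algebra_simps)

lemma ode: "y * FF2 y + FF1 y + FF y = 0"
proof -
  have s1: "summable (\<lambda>n. bb (Suc n) * y ^ Suc n)"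
    using sum_bb[of y] by (subst summable_Suc_iff)
  have s2: "summable (\<lambda>n. d1 (Suc n) * y ^ Suc n)"
    using sum_d1[of y] by (subst summable_Suc_iff)
  have s3: "summable (\<lambda>n. y * (d2 n * y ^ n))"
    using sum_d2[of y] by (rule summable_mult)
  have F: "FF y = 1 + (\<Sum>n. bb (Suc n) * y ^ Suc n)"
    unfolding FF_def using suminf_split_head[OF sum_bb[of y]] by (simp add: bb_def)
  have F1: "FF1 y = -1 + (\<Sum>n. d1 (Suc n) * y ^ Suc n)"
    unfolding FF1_def using suminf_split_head[OF sum_d1[of y]] by (simp add: d1_def)
  have F2: "y * FF2 y = (\<Sum>n. y * (d2 n * y ^ n))"
    unfolding FF2_def using suminf_mult[OF sum_d2[of y], of y] by simp
  have "(\<Sum>n. y * (d2 n * y ^ n)) + (\<Sum>n. d1 (Suc n) * y ^ Suc n) + (\<Sum>n. bb (Suc n) * y ^ Suc n)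
      = (\<Sum>n. y * (d2 n * y ^ n) + d1 (Suc n) * y ^ Suc n + bb (Suc n) * y ^ Suc n)"
    using s1 s2 s3 by (simp add: suminf_add summable_add)
  also have "\<dots> = (\<Sum>n. (d2 n + d1 (n+1) + bb (n+1)) * y ^ Suc n)"
    by (simp add: algebra_simps)
  also have "\<dots> = 0" using coeff_ode by simp
  finally show ?thesis using F F1 F2 by linarith
qed

definition EE :: "real \<Rightarrow> real" where "EE y = (FF y)^2 + y * (FF1 y)^2"

lemma EE_deriv: "(EE has_real_derivative (- ((FF1 y)^2))) (at y)"
proof -
  have "(EE has_real_derivative (2 * FF y * FF1 y + ((FF1 y)^2 + y * (2 * FF1 y * FF2 y)))) (at y)"
    unfolding EE_def
    by (auto intro!: derivative_eq_intros FF_deriv FF1_deriv)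
  moreover have "2 * FF y * FF1 y + ((FF1 y)^2 + y * (2 * FF1 y * FF2 y)) = (- ((FF1 y)^2))"
  proof -
    have "y * FF2 y = - FF1 y - FF y" using ode[of y] by linarith
    then have "y * (2 * FF1 y * FF2 y) = 2 * FF1 y * (- FF1 y - FF y)"
      by (metis mult.left_commute)
    then show ?thesis by (simp add: power2_eq_square algebra_simps)
  qed
  ultimately show ?thesis by simp
qed

lemma FF0: "FF 0 = 1" unfolding FF_def
  using suminf_split_head[OF sum_bb[of 0]] by (simp add: bb_def)
lemma FF1_0: "FF1 0 = -1" unfolding FF1_def
  using suminf_split_head[OF sum_d1[of 0]] by (simp add: d1_def)
lemma EE0: "EE 0 = 1" by (simp add: EE_def FF0)

lemma FF_lt1:
  assumes "y > 0" shows "(FF y)^2 < 1"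
proof -
  have cont: "isCont FF1 0" using FF1_deriv[of 0] by (rule DERIV_isCont)
  then obtain d where d: "d > 0" "\<And>x. \<bar>x - 0\<bar> < d \<Longrightarrow> \<bar>FF1 x - FF1 0\<bar> < 1"
    unfolding continuous_at_eps_delta by (metis dist_real_def zero_less_one)
  define e where "e = min (d/2) y"
  have e: "e > 0" "e \<le> y" "e < d" using d assms by (auto simp: e_def)
  have "EE e < EE 0"
  proof (rule DERIV_neg_imp_decreasing[OF e(1)])
    fix x assume x: "0 \<le> x" "x \<le> e"
    have "\<bar>FF1 x - FF1 0\<bar> < 1" using d(2)[of x] x e by auto
    then have "FF1 x \<noteq> 0" using FF1_0 by auto
    then show "\<exists>z. DERIV EE x :> z \<and> z < 0"
      using EE_deriv[of x] by (intro exI[of _ "- ((FF1 x)^2)"]) auto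
  qed
  moreover have "EE y \<le> EE e"
    using e(2) by (rule DERIV_nonpos_imp_nonincreasing) (meson EE_deriv neg_le_0_iff_le zero_le_power2)
  moreover have "(FF y)^2 \<le> EE y" using assms by (simp add: EE_def)
  ultimately show ?thesis using EE0 by linarith
qed

lemma besselJ0_FF: "besselJ0 x = FF (x^2/4)"
proof -
  have "(-1) ^ m * (x / 2) ^ (2 * m) / (fact m)^2 = bb m * (x^2/4) ^ m" for m
    by (simp add: bb_def power_mult power_divide)
  then show ?thesis unfolding besselJ0_def FF_def by simp
qed

lemma besselJ0_sq_lt1: "x \<noteq> 0 \<Longrightarrow> (besselJ0 x)^2 < 1"
  unfolding besselJ0_FF by (rule FF_lt1) simp

lemma nn_sup_Ici:
  fixes G :: "real \<Rightarrow> ennreal" and b :: "nat \<Rightarrow> real"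
  assumes [measurable]: "G \<in> borel_measurable borel" and inc: "incseq b" and unb: "\<And>x. \<exists>n. x \<le> b n"
  shows "(\<integral>\<^sup>+x. G x * indicator {0..} x \<partial>lborel) = (SUP n. \<integral>\<^sup>+x. G x * indicator {0..b n} x \<partial>lborel)"
proof -
  let ?f = "\<lambda>n x. G x * indicator {0..b n} x"
  have mono: "incseq ?f"
    using inc by (auto simp: incseq_def le_fun_def split: split_indicator intro: order_trans)
  have "(SUP n. ?f n x) = G x * indicator {0..} x" for x
  proof (rule LIMSEQ_unique[OF LIMSEQ_SUP])
    show "incseq (\<lambda>n. ?f n x)" using mono by (auto simp: incseq_def le_fun_def)
    obtain n where n: "x \<le> b n" using unb by blast
    have "eventually (\<lambda>m. ?f m x = G x * indicator {0..} x) sequentially"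
    proof (rule eventually_sequentiallyI[where c=n])
      fix m assume "n \<le> m"
      then have "b n \<le> b m" using inc by (simp add: incseq_def)
      then show "?f m x = G x * indicator {0..} x" using n by (auto split: split_indicator)
    qed
    then show "(\<lambda>n. ?f n x) \<longlonglongrightarrow> G x * indicator {0..} x" by (rule tendsto_eventually)
  qed
  then have "(\<integral>\<^sup>+x. G x * indicator {0..} x \<partial>lborel) = (\<integral>\<^sup>+x. (SUP n. ?f n x) \<partial>lborel)" by simp
  also have "\<dots> = (SUP n. \<integral>\<^sup>+x. ?f n x \<partial>lborel)"
    by (rule nn_integral_monotone_convergence_SUP[OF mono]) simp
  finally show ?thesis .
qed

lemma nn_SQ:
  fixes f :: "real \<Rightarrow> real"
  assumes [measurable]: "f \<in> borel_measurable borel"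
  shows "(\<integral>\<^sup>+z. ennreal (f z) * indicator {0..} z \<partial>lborel) =
         (\<integral>\<^sup>+x. ennreal (f (x^2) * (2 * x)) * indicator {0..} x \<partial>lborel)"
proof -
  have unb1: "\<exists>n. x \<le> real n ^ 2" for x :: real
  proof -
    obtain n :: nat where "max x 1 \<le> real n" using real_arch_simple by blast
    then have "x \<le> real n" "1 \<le> real n" by auto
    then have "x \<le> real n ^ 2" by (smt (verit) power2_eq_square mult_le_cancel_left1)
    then show ?thesis by blast
  qed
  have unb2: "\<exists>n. x \<le> real n" for x :: real using real_arch_simple by blast
  have inc1: "incseq (\<lambda>n. real n ^ 2)" by (auto simp: incseq_def intro: power_mono)
  have inc2: "incseq (\<lambda>n. real n)" by (auto simp: incseq_def)
  have "(\<integral>\<^sup>+z. ennreal (f z) * indicator {0..} z \<partial>lborel) =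
        (SUP n. \<integral>\<^sup>+z. ennreal (f z) * indicator {0..real n ^ 2} z \<partial>lborel)"
    by (rule nn_sup_Ici[OF _ inc1 unb1]) simp
  also have "\<dots> = (SUP n. \<integral>\<^sup>+x. ennreal (f (x^2) * (2 * x)) * indicator {0..real n} x \<partial>lborel)"
  proof (rule SUP_cong[OF refl])
    fix n :: nat
    have "(\<integral>\<^sup>+z. ennreal (f z) * indicator {0..real n ^ 2} z \<partial>lborel) =
          (\<integral>\<^sup>+z. ennreal (f z * indicator {(\<lambda>x. x^2) 0..(\<lambda>x. x^2) (real n)} z) \<partial>lborel)"
      by (intro nn_integral_cong) (auto split: split_indicator)
    also have "\<dots> = (\<integral>\<^sup>+x. ennreal (f ((\<lambda>x. x^2) x) * (2 * x) * indicator {0..real n} x) \<partial>lborel)"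
      by (rule nn_integral_substitution[where g' = "\<lambda>x. 2 * x"])
         (auto intro!: derivative_eq_intros continuous_intros simp: set_borel_measurable_def)
    also have "\<dots> = (\<integral>\<^sup>+x. ennreal (f (x^2) * (2 * x)) * indicator {0..real n} x \<partial>lborel)"
      by (intro nn_integral_cong) (auto split: split_indicator)
    finally show "(\<integral>\<^sup>+z. ennreal (f z) * indicator {0..real n ^ 2} z \<partial>lborel) =
          (\<integral>\<^sup>+x. ennreal (f (x^2) * (2 * x)) * indicator {0..real n} x \<partial>lborel)" .
  qed
  also have "\<dots> = (\<integral>\<^sup>+x. ennreal (f (x^2) * (2 * x)) * indicator {0..} x \<partial>lborel)"
    by (rule nn_sup_Ici[OF _ inc2 unb2, symmetric]) simp
  finally show ?thesis .
qed

lemma nn_even: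
  fixes F :: "real \<Rightarrow> ennreal"
  assumes [measurable]: "F \<in> borel_measurable borel" and ev: "\<And>y. F (- y) = F y"
  shows "(\<integral>\<^sup>+y. F y \<partial>lborel) = 2 * (\<integral>\<^sup>+y. F y * indicator {0..} y \<partial>lborel)"
proof -
  have "(\<integral>\<^sup>+y. F y \<partial>lborel) = (\<integral>\<^sup>+y. F y * indicator {0..} y + F y * indicator {..<0} y \<partial>lborel)"
    by (intro nn_integral_cong) (auto split: split_indicator)
  also have "\<dots> = (\<integral>\<^sup>+y. F y * indicator {0..} y \<partial>lborel) + (\<integral>\<^sup>+y. F y * indicator {..<0} y \<partial>lborel)"
    by (rule nn_integral_add) auto
  also have "(\<integral>\<^sup>+y. F y * indicator {..<0} y \<partial>lborel) = (\<integral>\<^sup>+y. F (0 + (-1) * y) * indicator {..<0} (0 + (-1) * y) \<partial>lborel)"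
    using nn_integral_real_affine[of "\<lambda>y. F y * indicator {..<0} y" "-1" 0] by simp
  also have "\<dots> = (\<integral>\<^sup>+y. F y * indicator {0..} y \<partial>lborel)"
    by (intro nn_integral_cong_AE, use AE_lborel_singleton[of 0] in eventually_elim)
       (auto simp: ev split: split_indicator)
  finally show ?thesis by (simp add: mult_2)
qed

lemma nn_arctan: "(\<integral>\<^sup>+s. ennreal (1 / (1 + s^2)) * indicator {0..} s \<partial>lborel) = ennreal (pi / 2)"
proof -
  have "(\<integral>\<^sup>+s. ennreal (1 / (1 + s^2)) * indicator {0..} s \<partial>lborel) = ennreal (pi / 2 - arctan 0)"
  proof (rule nn_integral_FTC_atLeast)
    show "(arctan \<longlongrightarrow> pi / 2) at_top" by (rule tendsto_arctan_at_top)
  qed (auto intro!: derivative_eq_intros simp: add_nonneg_eq_0_iff field_simps power2_eq_square)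
  then show ?thesis by simp
qed

lemma polar_inner:
  fixes h :: "real \<Rightarrow> real" and s :: real
  assumes [measurable]: "h \<in> borel_measurable borel" and nn: "\<And>z. 0 \<le> h z"
  shows "(\<integral>\<^sup>+x. ennreal (x * h (x^2 * (1 + s^2))) * indicator {0..} x \<partial>lborel) =
         ennreal (1 / (2 * (1 + s^2))) * (\<integral>\<^sup>+z. ennreal (h z) * indicator {0..} z \<partial>lborel)"
proof -
  define c where "c = sqrt (1 + s^2)"
  have c: "c > 0" "c^2 = 1 + s^2" unfolding c_def by (auto simp: add_pos_nonneg)
  have "(\<integral>\<^sup>+x. ennreal (x * h (x^2 * (1 + s^2))) * indicator {0..} x \<partial>lborel) =
        ennreal \<bar>1/c\<bar> * (\<integral>\<^sup>+w. ennreal ((0 + 1/c * w) * h ((0 + 1/c * w)^2 * (1 + s^2))) * indicator {0..} (0 + 1/c * w) \<partial>lborel)"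
    by (rule nn_integral_real_affine) (use c in auto)
  also have "\<dots> = ennreal (1/c) * (\<integral>\<^sup>+w. ennreal (1/(2*c)) * (ennreal (h (w^2) * (2 * w)) * indicator {0..} w) \<partial>lborel)"
  proof -
    have "ennreal ((0 + 1/c * w) * h ((0 + 1/c * w)^2 * (1 + s^2))) * indicator {0..} (0 + 1/c * w) =
          ennreal (1/(2*c)) * (ennreal (h (w^2) * (2 * w)) * indicator {0..} w)" for w
    proof (cases "w \<ge> 0")
      case True
      have nz: "1 + s^2 \<noteq> 0" by (metis add_pos_nonneg less_irrefl zero_le_power2 zero_less_one)
      have "(1/c * w)^2 * (1 + s^2) = w^2" using c nz by (simp add: power_mult_distrib power_divide)
      moreover have r: "1/c * w * h (w^2) = (1/(2*c)) * (h (w^2) * (2 * w))" by (simp add: field_simps)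
      moreover have "ennreal ((1/(2*c)) * (h (w^2) * (2 * w))) = ennreal (1/(2*c)) * ennreal (h (w^2) * (2 * w))"
        by (rule ennreal_mult) (use True c nn[of "w^2"] in auto)
      ultimately show ?thesis using True c by (simp add: mult.assoc mult.commute)
    next
      case False then show ?thesis using c by (simp add: indicator_def zero_le_divide_iff zero_le_mult_iff)
    qed
    then show ?thesis using c by simp
  qed
  also have "\<dots> = ennreal (1/c) * (ennreal (1/(2*c)) * (\<integral>\<^sup>+w. ennreal (h (w^2) * (2 * w)) * indicator {0..} w \<partial>lborel))"
    by (simp add: nn_integral_cmult)
  also have "\<dots> = ennreal (1 / (2 * (1 + s^2))) * (\<integral>\<^sup>+z. ennreal (h z) * indicator {0..} z \<partial>lborel)"
  proof -
    have "ennreal (1/c) * ennreal (1/(2*c)) = ennreal (1/c * (1/(2*c)))"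
      using c by (intro ennreal_mult[symmetric]) auto
    also have "1/c * (1/(2*c)) = 1 / (2 * (1 + s^2))"
      using c by (simp add: field_simps power2_eq_square)
    finally show ?thesis using nn_SQ[of h] by (simp add: mult.assoc[symmetric])
  qed
  finally show ?thesis .
qed

lemma polar:
  fixes h :: "real \<Rightarrow> real"
  assumes [measurable]: "h \<in> borel_measurable borel" and nn: "\<And>z. 0 \<le> h z"
  shows "(\<integral>\<^sup>+x. \<integral>\<^sup>+y. ennreal (h (x^2 + y^2)) \<partial>lborel \<partial>lborel) =
         ennreal pi * (\<integral>\<^sup>+z. ennreal (h z) * indicator {0..} z \<partial>lborel)"
proof -
  define I where "I = (\<integral>\<^sup>+z. ennreal (h z) * indicator {0..} z \<partial>lborel)"
  define Q where "Q x = (\<integral>\<^sup>+y. ennreal (h (x^2 + y^2)) * indicator {0..} y \<partial>lborel)" for x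
  have Qm[measurable]: "Q \<in> borel_measurable borel" unfolding Q_def by measurable
  have "(\<integral>\<^sup>+x. \<integral>\<^sup>+y. ennreal (h (x^2 + y^2)) \<partial>lborel \<partial>lborel) = (\<integral>\<^sup>+x. 2 * Q x \<partial>lborel)"
    unfolding Q_def by (intro nn_integral_cong nn_even) auto
  also have "\<dots> = 2 * (\<integral>\<^sup>+x. Q x \<partial>lborel)" by (simp add: nn_integral_cmult)
  also have "(\<integral>\<^sup>+x. Q x \<partial>lborel) = 2 * (\<integral>\<^sup>+x. Q x * indicator {0..} x \<partial>lborel)"
    by (rule nn_even) (auto simp: Q_def)
  also have "(\<integral>\<^sup>+x. Q x * indicator {0..} x \<partial>lborel) =
      (\<integral>\<^sup>+x. \<integral>\<^sup>+s. ennreal (x * h (x^2 * (1 + s^2))) * indicator {0..} x * indicator {0..} s \<partial>lborel \<partial>lborel)"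
  proof (intro nn_integral_cong_AE, use AE_lborel_singleton[of 0] in eventually_elim)
    fix x :: real assume "x \<noteq> 0"
    show "Q x * indicator {0..} x =
      (\<integral>\<^sup>+s. ennreal (x * h (x^2 * (1 + s^2))) * indicator {0..} x * indicator {0..} s \<partial>lborel)"
    proof (cases "x > 0")
      case True
      have "Q x = ennreal \<bar>x\<bar> * (\<integral>\<^sup>+s. ennreal (h (x^2 + (0 + x * s)^2)) * indicator {0..} (0 + x * s) \<partial>lborel)"
        unfolding Q_def by (rule nn_integral_real_affine) (use True in auto)
      also have "\<dots> = (\<integral>\<^sup>+s. ennreal x * (ennreal (h (x^2 * (1 + s^2))) * indicator {0..} s) \<partial>lborel)"
      proof -
        have "ennreal (h (x^2 + (0 + x * s)^2)) * indicator {0..} (0 + x * s) =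
              ennreal (h (x^2 * (1 + s^2))) * indicator {0..} s" for s
          using True by (auto simp: power_mult_distrib algebra_simps zero_le_mult_iff indicator_def)
        then show ?thesis using True by (simp add: nn_integral_cmult)
      qed
      also have "\<dots> = (\<integral>\<^sup>+s. ennreal (x * h (x^2 * (1 + s^2))) * indicator {0..} s \<partial>lborel)"
        using True nn by (intro nn_integral_cong) (simp add: ennreal_mult mult.assoc)
      finally show ?thesis using True
        by (simp add: nn_integral_multc[symmetric] indicator_def)
    next
      case False
      then show ?thesis using \<open>x \<noteq> 0\<close> by (simp add: indicator_def)
    qed
  qed
  also have "\<dots> = (\<integral>\<^sup>+s. \<integral>\<^sup>+x. ennreal (x * h (x^2 * (1 + s^2))) * indicator {0..} x * indicator {0..} s \<partial>lborel \<partial>lborel)"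
    by (rule lborel_pair.Fubini'[symmetric]) measurable
  also have "\<dots> = (\<integral>\<^sup>+s. (I * ennreal (1 / 2)) * (ennreal (1 / (1 + s^2)) * indicator {0..} s) \<partial>lborel)"
  proof (intro nn_integral_cong)
    fix s :: real
    have "(\<integral>\<^sup>+x. ennreal (x * h (x^2 * (1 + s^2))) * indicator {0..} x * indicator {0..} s \<partial>lborel)
        = (\<integral>\<^sup>+x. ennreal (x * h (x^2 * (1 + s^2))) * indicator {0..} x \<partial>lborel) * indicator {0..} s"
      by (simp add: nn_integral_multc)
    also have "\<dots> = ennreal (1 / (2 * (1 + s^2))) * I * indicator {0..} s"
      unfolding I_def using polar_inner[of h s] nn by simp
    also have "ennreal (1 / (2 * (1 + s^2))) = ennreal (1/2) * ennreal (1 / (1 + s^2))"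
      by (subst ennreal_mult[symmetric]) (auto simp: add_nonneg_nonneg)
    finally show "(\<integral>\<^sup>+x. ennreal (x * h (x^2 * (1 + s^2))) * indicator {0..} x * indicator {0..} s \<partial>lborel)
        = (I * ennreal (1 / 2)) * (ennreal (1 / (1 + s^2)) * indicator {0..} s)"
      by (simp add: ac_simps)
  qed
  also have "\<dots> = I * ennreal (1/2) * ennreal (pi / 2)"
    by (simp add: nn_integral_cmult nn_arctan)
  finally have "(\<integral>\<^sup>+x. \<integral>\<^sup>+y. ennreal (h (x^2 + y^2)) \<partial>lborel \<partial>lborel) = 2 * (2 * (I * ennreal (1/2) * ennreal (pi / 2)))" .
  also have "\<dots> = I * (4 * (ennreal (1/2) * ennreal (pi / 2)))"
    by (simp add: algebra_simps)
  also have "4 * (ennreal (1/2) * ennreal (pi / 2)) = ennreal pi"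
  proof -
    have "ennreal (1/2) * ennreal (pi / 2) = ennreal (1/2 * (pi/2))" by (rule ennreal_mult[symmetric]) auto
    moreover have "(4::ennreal) = ennreal 4" by simp
    moreover have "ennreal 4 * ennreal (1/2 * (pi/2)) = ennreal (4 * (1/2 * (pi/2)))" by (rule ennreal_mult[symmetric]) auto
    ultimately show ?thesis by simp
  qed
  finally show ?thesis by (simp add: I_def mult.commute)
qed

definition Nm :: "real measure" where
  "Nm = density lborel (\<lambda>x. ennreal (normal_density 0 (sqrt (1/2)) x))"

lemma phi_eq: "normal_density 0 (sqrt (1/2)) x = exp (-(x^2)) / sqrt pi"
  by (simp add: normal_density_def real_sqrt_divide power_divide)

lemma Nm_alt: "Nm = density lborel (\<lambda>x. ennreal (exp (-(x^2)) / sqrt pi))"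
  unfolding Nm_def phi_eq ..

lemma prob_Nm: "prob_space Nm"
  unfolding Nm_def by (rule prob_space_normal_density) simp

lemma sets_Nm[simp, measurable_cong]: "sets Nm = sets borel"
  by (simp add: Nm_def)
lemma space_Nm[simp]: "space Nm = UNIV"
  by (simp add: Nm_def)

lemma nn_Nm:
  assumes [measurable]: "g \<in> borel_measurable borel"
  shows "(\<integral>\<^sup>+x. g x \<partial>Nm) = (\<integral>\<^sup>+x. ennreal (exp (-(x^2)) / sqrt pi) * g x \<partial>lborel)"
  unfolding Nm_alt by (subst nn_integral_density) auto

lemma B1:
  fixes f :: "real \<Rightarrow> real"
  assumes [measurable]: "f \<in> borel_measurable borel" and nn: "\<And>z. 0 \<le> f z"
  shows "(\<integral>\<^sup>+x. \<integral>\<^sup>+y. ennreal (f (x^2 + y^2)) \<partial>Nm \<partial>Nm) =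
         (\<integral>\<^sup>+z. ennreal (exp (- z) * f z) * indicator {0..} z \<partial>lborel)"
proof -
  define h where "h z = exp (- z) * f z" for z
  have hm[measurable]: "h \<in> borel_measurable borel" unfolding h_def by measurable
  have hnn: "0 \<le> h z" for z unfolding h_def using nn by simp
  have pt: "ennreal (exp (-(x^2)) / sqrt pi) * (ennreal (exp (-(y^2)) / sqrt pi) * ennreal (f (x^2 + y^2)))
        = ennreal (1 / pi) * ennreal (h (x^2 + y^2))" for x y
  proof -
    have "exp (-(x^2)) / sqrt pi * (exp (-(y^2)) / sqrt pi * f (x^2 + y^2)) = 1 / pi * h (x^2 + y^2)"
      by (simp add: h_def exp_add[symmetric] field_simps)
    then show ?thesis using nn[of "x^2+y^2"] hnn[of "x^2+y^2"]
      by (simp add: ennreal_mult[symmetric])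
  qed
  have "(\<integral>\<^sup>+x. \<integral>\<^sup>+y. ennreal (f (x^2 + y^2)) \<partial>Nm \<partial>Nm) =
        (\<integral>\<^sup>+x. \<integral>\<^sup>+y. ennreal (exp (-(y^2)) / sqrt pi) * ennreal (f (x^2 + y^2)) \<partial>lborel \<partial>Nm)"
    by (intro nn_integral_cong nn_Nm) simp
  also have "\<dots> = (\<integral>\<^sup>+x. ennreal (exp (-(x^2)) / sqrt pi) * (\<integral>\<^sup>+y. ennreal (exp (-(y^2)) / sqrt pi) * ennreal (f (x^2 + y^2)) \<partial>lborel) \<partial>lborel)"
    by (rule nn_Nm) measurable
  also have "\<dots> = (\<integral>\<^sup>+x. \<integral>\<^sup>+y. ennreal (1 / pi) * ennreal (h (x^2 + y^2)) \<partial>lborel \<partial>lborel)"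
    by (simp add: nn_integral_cmult[symmetric] pt)
  also have "\<dots> = ennreal (1 / pi) * (\<integral>\<^sup>+x. \<integral>\<^sup>+y. ennreal (h (x^2 + y^2)) \<partial>lborel \<partial>lborel)"
    by (simp add: nn_integral_cmult)
  also have "\<dots> = ennreal (1 / pi) * (ennreal pi * (\<integral>\<^sup>+z. ennreal (h z) * indicator {0..} z \<partial>lborel))"
    using polar[OF hm hnn] by simp
  also have "\<dots> = (\<integral>\<^sup>+z. ennreal (h z) * indicator {0..} z \<partial>lborel)"
  proof -
    have "ennreal (1 / pi) * ennreal pi = 1" by (subst ennreal_mult[symmetric]) auto
    then show ?thesis by (simp add: mult.assoc[symmetric])
  qed
  finally show ?thesis unfolding h_def .
qed

lemma emeasure_Nm:
  assumes [measurable]: "A \<in> sets borel"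
  shows "emeasure Nm A = (\<integral>\<^sup>+x. ennreal (exp (-(x^2)) / sqrt pi) * indicator A x \<partial>lborel)"
  unfolding Nm_alt by (subst emeasure_density) auto

lemma anderson1:
  fixes m T :: real
  shows "emeasure Nm {x. (x + m)^2 \<le> T} \<le> emeasure Nm {x. x^2 \<le> T}"
proof -
  define g where "g x = ennreal (exp (-(x^2)) / sqrt pi)" for x :: real
  have gm[measurable]: "g \<in> borel_measurable borel" unfolding g_def by measurable
  define J where "J = {x::real. (x + m)^2 \<le> T}"
  define B where "B = {x::real. x^2 \<le> T}"
  define D where "D = {x::real. (x + m)^2 \<le> T \<and> \<not> x^2 \<le> T}"
  have [measurable]: "J \<in> sets borel" "B \<in> sets borel" "D \<in> sets borel"
    unfolding J_def B_def D_def by measurable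
  have "emeasure Nm J = (\<integral>\<^sup>+x. g x * indicator J x \<partial>lborel)"
    unfolding g_def by (rule emeasure_Nm) simp
  also have "\<dots> = (\<integral>\<^sup>+x. g x * indicator (J \<inter> B) x + g x * indicator D x \<partial>lborel)"
    by (intro nn_integral_cong) (auto simp: J_def B_def D_def split: split_indicator)
  also have "\<dots> = (\<integral>\<^sup>+x. g x * indicator (J \<inter> B) x \<partial>lborel) + (\<integral>\<^sup>+x. g x * indicator D x \<partial>lborel)"
    by (rule nn_integral_add) auto
  also have "(\<integral>\<^sup>+x. g x * indicator D x \<partial>lborel) \<le> (\<integral>\<^sup>+x. g (- x - m) * indicator D x \<partial>lborel)"
  proof (intro nn_integral_mono)
    fix x :: real
    show "g x * indicator D x \<le> g (- x - m) * indicator D x"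
    proof (cases "x \<in> D")
      case True
      then have "(x + m)^2 < x^2" unfolding D_def by auto
      then have "exp (-(x^2)) \<le> exp (-((- x - m)^2))" by (simp add: power2_commute add.commute)
      then show ?thesis unfolding g_def
        by (auto intro!: ennreal_leI divide_right_mono split: split_indicator)
    qed simp
  qed
  also have "(\<integral>\<^sup>+x. g (- x - m) * indicator D x \<partial>lborel) = (\<integral>\<^sup>+y. g y * indicator D (- m - y) \<partial>lborel)"
    using nn_integral_real_affine[of "\<lambda>x. g (- x - m) * indicator D x" "-1" "-m"] by simp
  also have "(\<integral>\<^sup>+x. g x * indicator (J \<inter> B) x \<partial>lborel) + (\<integral>\<^sup>+y. g y * indicator D (- m - y) \<partial>lborel)
      = (\<integral>\<^sup>+y. g y * indicator (J \<inter> B) y + g y * indicator D (- m - y) \<partial>lborel)"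
    by (rule nn_integral_add[symmetric]) auto
  also have "\<dots> \<le> (\<integral>\<^sup>+y. g y * indicator B y \<partial>lborel)"
  proof (intro nn_integral_mono)
    fix y :: real
    have "- m - y \<in> D \<Longrightarrow> y \<in> B \<and> y \<notin> J"
      unfolding D_def B_def J_def by (auto simp: power2_commute algebra_simps)
    then show "g y * indicator (J \<inter> B) y + g y * indicator D (- m - y) \<le> g y * indicator B y"
      by (auto split: split_indicator)
  qed
  also have "\<dots> = emeasure Nm B"
    unfolding g_def by (rule emeasure_Nm[symmetric]) simp
  finally show ?thesis unfolding J_def B_def by (simp add: add_left_mono)
qed

lemma Nm_compl: "A \<in> sets borel \<Longrightarrow> emeasure Nm (UNIV - A) = 1 - emeasure Nm A"
proof -
  assume A: "A \<in> sets borel"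
  interpret prob_space Nm by (rule prob_Nm)
  show ?thesis using emeasure_compl[of A Nm] A emeasure_space_1 emeasure_finite[of A] by simp
qed

lemma anderson1c:
  fixes m T :: real
  shows "emeasure Nm {x. T < x^2} \<le> emeasure Nm {x. T < (x + m)^2}"
proof -
  have e1: "{x. T < x^2} = UNIV - {x. x^2 \<le> T}" by auto
  have e2: "{x. T < (x + m)^2} = UNIV - {x. (x + m)^2 \<le> T}" by auto
  have s1: "{x. x^2 \<le> T} \<in> sets borel" "{x::real. (x + m)^2 \<le> T} \<in> sets borel" by measurable
  show ?thesis unfolding e1 e2 Nm_compl[OF s1(1)] Nm_compl[OF s1(2)]
    by (rule ennreal_minus_mono) (auto simp: anderson1)
qed

lemma pair_Nm: "pair_sigma_finite Nm Nm"
proof -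
  interpret prob_space Nm by (rule prob_Nm)
  show ?thesis by (intro pair_sigma_finite.intro) (rule sigma_finite_measure_axioms)+
qed

lemma exp_tail:
  assumes "t \<ge> 0"
  shows "(\<integral>\<^sup>+z. ennreal (exp (- z) * indicator {t<..} z) * indicator {0..} z \<partial>lborel) = ennreal (exp (- t))"
proof -
  have "(\<integral>\<^sup>+z. ennreal (exp (- z) * indicator {t<..} z) * indicator {0..} z \<partial>lborel) =
        (\<integral>\<^sup>+z. ennreal (exp (- z)) * indicator {t..} z \<partial>lborel)"
    by (intro nn_integral_cong_AE, use AE_lborel_singleton[of t] in eventually_elim)
       (use assms in \<open>auto split: split_indicator\<close>)
  also have "\<dots> = ennreal (0 - (- exp (- t)))"
  proof (rule nn_integral_FTC_atLeast)
    have h: "((\<lambda>z::real. exp (- z)) \<longlongrightarrow> 0) at_top"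
      by (rule filterlim_compose[OF exp_at_bot filterlim_uminus_at_bot_at_top])
    show "((\<lambda>z::real. - exp (- z)) \<longlongrightarrow> 0) at_top"
      using tendsto_minus[OF h] by simp
  qed (auto intro!: derivative_eq_intros)
  finally show ?thesis by simp
qed

lemma tail2D:
  fixes t p1 p2 :: real
  assumes t: "t \<ge> 0"
  shows "ennreal (exp (- t)) \<le> (\<integral>\<^sup>+x. emeasure Nm {y. t < (x + p1)^2 + (y + p2)^2} \<partial>Nm)"
proof -
  interpret P: pair_sigma_finite Nm Nm by (rule pair_Nm)
  have "(\<integral>\<^sup>+x. emeasure Nm {y. t < (x + p1)^2 + y^2} \<partial>Nm) \<le> (\<integral>\<^sup>+x. emeasure Nm {y. t < (x + p1)^2 + (y + p2)^2} \<partial>Nm)"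
  proof (intro nn_integral_mono)
    fix x
    have "{y. t < (x + p1)^2 + y^2} = {y. t - (x + p1)^2 < y^2}"
         "{y. t < (x + p1)^2 + (y + p2)^2} = {y. t - (x + p1)^2 < (y + p2)^2}" by auto
    then show "emeasure Nm {y. t < (x + p1)^2 + y^2} \<le> emeasure Nm {y. t < (x + p1)^2 + (y + p2)^2}"
      using anderson1c by simp
  qed
  moreover have "(\<integral>\<^sup>+x. emeasure Nm {y. t < (x + p1)^2 + y^2} \<partial>Nm) =
      (\<integral>\<^sup>+x. \<integral>\<^sup>+y. indicator {z. t < z} ((x + p1)^2 + y^2) \<partial>Nm \<partial>Nm)"
  proof (intro nn_integral_cong)
    fix x
    have "{y. t < (x + p1)^2 + y^2} \<in> sets Nm" by simp
    then have "emeasure Nm {y. t < (x + p1)^2 + y^2} = (\<integral>\<^sup>+y. indicator {y. t < (x + p1)^2 + y^2} y \<partial>Nm)"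
      by (rule nn_integral_indicator[symmetric])
    also have "\<dots> = (\<integral>\<^sup>+y. indicator {z. t < z} ((x + p1)^2 + y^2) \<partial>Nm)"
      by (intro nn_integral_cong) (auto split: split_indicator)
    finally show "emeasure Nm {y. t < (x + p1)^2 + y^2} = (\<integral>\<^sup>+y. indicator {z. t < z} ((x + p1)^2 + y^2) \<partial>Nm)" .
  qed
  moreover have "(\<integral>\<^sup>+x. \<integral>\<^sup>+y. indicator {z. t < z} ((x + p1)^2 + y^2) \<partial>Nm \<partial>Nm) =
      (\<integral>\<^sup>+y. \<integral>\<^sup>+x. indicator {z. t < z} ((x + p1)^2 + y^2) \<partial>Nm \<partial>Nm)"
    by (rule P.Fubini'[symmetric]) measurable
  moreover have "(\<integral>\<^sup>+y. \<integral>\<^sup>+x. indicator {z. t < z} (x^2 + y^2) \<partial>Nm \<partial>Nm) \<le>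
      (\<integral>\<^sup>+y. \<integral>\<^sup>+x. indicator {z. t < z} ((x + p1)^2 + y^2) \<partial>Nm \<partial>Nm)"
  proof (rule nn_integral_mono)
    fix y
    have a: "(\<integral>\<^sup>+x. indicator {z. t < z} (x^2 + y^2) \<partial>Nm) = emeasure Nm {x. t - y^2 < x^2}"
    proof -
      have "(\<integral>\<^sup>+x. indicator {z. t < z} (x^2 + y^2) \<partial>Nm) = (\<integral>\<^sup>+x. indicator {x. t - y^2 < x^2} x \<partial>Nm)"
        by (intro nn_integral_cong) (auto split: split_indicator)
      also have "\<dots> = emeasure Nm {x. t - y^2 < x^2}" by (rule nn_integral_indicator) simp
      finally show ?thesis .
    qed
    have b: "(\<integral>\<^sup>+x. indicator {z. t < z} ((x + p1)^2 + y^2) \<partial>Nm) = emeasure Nm {x. t - y^2 < (x + p1)^2}"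
    proof -
      have "(\<integral>\<^sup>+x. indicator {z. t < z} ((x + p1)^2 + y^2) \<partial>Nm) = (\<integral>\<^sup>+x. indicator {x. t - y^2 < (x + p1)^2} x \<partial>Nm)"
        by (intro nn_integral_cong) (auto split: split_indicator)
      also have "\<dots> = emeasure Nm {x. t - y^2 < (x + p1)^2}" by (rule nn_integral_indicator) simp
      finally show ?thesis .
    qed
    show "(\<integral>\<^sup>+x. indicator {z. t < z} (x^2 + y^2) \<partial>Nm) \<le> (\<integral>\<^sup>+x. indicator {z. t < z} ((x + p1)^2 + y^2) \<partial>Nm)"
      using anderson1c[of "t - y^2" p1] a b by simp
  qed
  moreover have "(\<integral>\<^sup>+y. \<integral>\<^sup>+x. indicator {z. t < z} (x^2 + y^2) \<partial>Nm \<partial>Nm) = ennreal (exp (- t))"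
  proof -
    have "(\<integral>\<^sup>+y. \<integral>\<^sup>+x. indicator {z. t < z} (x^2 + y^2) \<partial>Nm \<partial>Nm) =
          (\<integral>\<^sup>+y. \<integral>\<^sup>+x. ennreal (indicator {t<..} (y^2 + x^2)) \<partial>Nm \<partial>Nm)"
      by (intro nn_integral_cong) (auto split: split_indicator)
    also have "\<dots> = (\<integral>\<^sup>+z. ennreal (exp (- z) * indicator {t<..} z) * indicator {0..} z \<partial>lborel)"
      by (rule B1) auto
    also have "\<dots> = ennreal (exp (- t))" by (rule exp_tail[OF t])
    finally show ?thesis .
  qed
  ultimately show ?thesis
    by (smt (verit, ccfv_threshold) order_trans)
qed

lemma nn_normal_density_1: "0 < \<sigma> \<Longrightarrow> (\<integral>\<^sup>+x. ennreal (normal_density \<mu> \<sigma> x) \<partial>lborel) = 1"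
proof -
  assume s: "0 < \<sigma>"
  interpret prob_space "density lborel (\<lambda>x. ennreal (normal_density \<mu> \<sigma> x))"
    by (rule prob_space_normal_density[OF s])
  have "emeasure (density lborel (\<lambda>x. ennreal (normal_density \<mu> \<sigma> x))) UNIV = 1"
    using emeasure_space_1 by simp
  then show ?thesis by (subst (asm) emeasure_density) auto
qed

lemma laplace1:
  fixes a q :: real
  assumes a: "a > 0"
  shows "(\<integral>\<^sup>+u. ennreal (exp (-(a * (u + q)^2))) \<partial>Nm) = ennreal (exp (-(a * q^2 / (1 + a))) / sqrt (1 + a))"
proof -
  define c where "c = a * q / (1 + a)"
  define s where "s = sqrt (1 / (2 * (1 + a)))"
  define K where "K = exp (-(a * q^2 / (1 + a))) / sqrt (1 + a)"
  have s: "s > 0" "s^2 = 1 / (2 * (1 + a))" unfolding s_def using a by auto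
  have K: "K \<ge> 0" unfolding K_def using a by simp
  have pt: "exp (-(u^2)) / sqrt pi * exp (-(a * (u + q)^2)) = K * normal_density (- c) s u" for u
  proof -
    have e: "-(u^2) - a * (u + q)^2 = -(a * q^2 / (1 + a)) + (-((u - - c)^2) / (2 * s^2))"
    proof -
      obtain b where b: "b = 1 + a" by blast
      then have ab: "a = b - 1" and bnz: "b \<noteq> 0" using a by auto
      show ?thesis unfolding s(2) c_def b[symmetric] unfolding ab using bnz
        by (simp add: field_simps power2_eq_square)
    qed
    have d: "1 / sqrt (2 * pi * s^2) = sqrt (1 + a) / sqrt pi"
    proof -
      have "sqrt (2 + a * 2) = sqrt (1 + a) * sqrt 2"
        by (subst real_sqrt_mult[symmetric]) (simp add: algebra_simps)
      then show ?thesis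
        unfolding s(2) using a by (simp add: real_sqrt_divide real_sqrt_mult field_simps)
    qed
    have "exp (-(u^2)) / sqrt pi * exp (-(a * (u + q)^2)) = exp (-(u^2) - a * (u + q)^2) / sqrt pi"
      by (simp add: exp_diff exp_minus field_simps)
    also have "\<dots> = exp (-(a * q^2 / (1 + a))) * exp (-((u - - c)^2) / (2 * s^2)) / sqrt pi"
      unfolding e by (simp add: exp_add[symmetric])
    also have "\<dots> = K * normal_density (- c) s u"
      unfolding normal_density_def K_def d using a by (simp add: field_simps)
    finally show ?thesis .
  qed
  have "(\<integral>\<^sup>+u. ennreal (exp (-(a * (u + q)^2))) \<partial>Nm) =
        (\<integral>\<^sup>+u. ennreal (exp (-(u^2)) / sqrt pi) * ennreal (exp (-(a * (u + q)^2))) \<partial>lborel)"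
    by (rule nn_Nm) measurable
  also have "\<dots> = (\<integral>\<^sup>+u. ennreal K * ennreal (normal_density (- c) s u) \<partial>lborel)"
    by (intro nn_integral_cong) (simp add: ennreal_mult[symmetric] pt[symmetric] K)
  also have "\<dots> = ennreal K"
    by (simp add: nn_integral_cmult nn_normal_density_1[OF s(1)])
  finally show ?thesis unfolding K_def .
qed

lemma psf_Nm: "product_sigma_finite (\<lambda>_. Nm)"
proof -
  interpret prob_space Nm by (rule prob_Nm)
  show ?thesis unfolding product_sigma_finite_def using sigma_finite_measure_axioms by simp
qed

lemma PiM1:
  assumes Fm[measurable]: "F \<in> borel_measurable borel"
  shows "(\<integral>\<^sup>+v. F (v i) \<partial>PiM {i} (\<lambda>_. Nm)) = (\<integral>\<^sup>+a. F a \<partial>Nm)"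
proof -
  interpret product_sigma_finite "\<lambda>_. Nm" by (rule psf_Nm)
  show ?thesis by (rule product_nn_integral_singleton) simp
qed

lemma PiM2:
  assumes d: "i0 \<noteq> i1"
  and Fm[measurable]: "(\<lambda>(a,b). F a b) \<in> borel_measurable (borel \<Otimes>\<^sub>M borel)"
  shows "(\<integral>\<^sup>+v. F (v i0) (v i1) \<partial>PiM {i0,i1} (\<lambda>_. Nm)) = (\<integral>\<^sup>+a. \<integral>\<^sup>+b. F a b \<partial>Nm \<partial>Nm)"
proof -
  interpret product_sigma_finite "\<lambda>_. Nm" by (rule psf_Nm)
  have m: "(\<lambda>v. F (v i0) (v i1)) \<in> borel_measurable (PiM {i0,i1} (\<lambda>_. Nm))"
  proof -
    have "(\<lambda>v. F (v i0) (v i1)) = (\<lambda>(a,b). F a b) \<circ> (\<lambda>v. (v i0, v i1))" by auto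
    also have "\<dots> \<in> borel_measurable (PiM {i0,i1} (\<lambda>_. Nm))"
      by (rule measurable_comp[OF _ Fm]) measurable
    finally show ?thesis .
  qed
  have "(\<integral>\<^sup>+v. F (v i0) (v i1) \<partial>PiM (insert i0 {i1}) (\<lambda>_. Nm)) =
        (\<integral>\<^sup>+a. \<integral>\<^sup>+v. F ((v(i0 := a)) i0) ((v(i0 := a)) i1) \<partial>PiM {i1} (\<lambda>_. Nm) \<partial>Nm)"
    by (rule product_nn_integral_insert_rev) (use d m in auto)
  also have "\<dots> = (\<integral>\<^sup>+a. \<integral>\<^sup>+v. F a (v i1) \<partial>PiM {i1} (\<lambda>_. Nm) \<partial>Nm)"
    using d by simp
  also have "\<dots> = (\<integral>\<^sup>+a. \<integral>\<^sup>+b. F a b \<partial>Nm \<partial>Nm)"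
  proof (intro nn_integral_cong PiM1)
    fix a
    have "(\<lambda>b. F a b) = (\<lambda>(a,b). F a b) \<circ> (\<lambda>b. (a, b))" by auto
    also have "\<dots> \<in> borel_measurable borel"
      by (rule measurable_comp[OF _ Fm]) measurable
    finally show "(\<lambda>b. F a b) \<in> borel_measurable borel" .
  qed
  finally show ?thesis by simp
qed

lemma PiM3:
  assumes d: "i0 \<noteq> i1" "i0 \<noteq> i2" "i1 \<noteq> i2"
  and Fm[measurable]: "(\<lambda>(a,b,c). F a b c) \<in> borel_measurable (borel \<Otimes>\<^sub>M borel \<Otimes>\<^sub>M borel)"
  shows "(\<integral>\<^sup>+v. F (v i0) (v i1) (v i2) \<partial>PiM {i0,i1,i2} (\<lambda>_. Nm)) = (\<integral>\<^sup>+a. \<integral>\<^sup>+b. \<integral>\<^sup>+c. F a b c \<partial>Nm \<partial>Nm \<partial>Nm)"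
proof -
  interpret product_sigma_finite "\<lambda>_. Nm" by (rule psf_Nm)
  have m: "(\<lambda>v. F (v i0) (v i1) (v i2)) \<in> borel_measurable (PiM {i0,i1,i2} (\<lambda>_. Nm))"
  proof -
    have "(\<lambda>v. F (v i0) (v i1) (v i2)) = (\<lambda>(a,b,c). F a b c) \<circ> (\<lambda>v. (v i0, v i1, v i2))" by auto
    also have "\<dots> \<in> borel_measurable (PiM {i0,i1,i2} (\<lambda>_. Nm))"
      by (rule measurable_comp[OF _ Fm]) measurable
    finally show ?thesis .
  qed
  have "(\<integral>\<^sup>+v. F (v i0) (v i1) (v i2) \<partial>PiM (insert i0 {i1,i2}) (\<lambda>_. Nm)) =
        (\<integral>\<^sup>+a. \<integral>\<^sup>+v. F ((v(i0 := a)) i0) ((v(i0 := a)) i1) ((v(i0 := a)) i2) \<partial>PiM {i1,i2} (\<lambda>_. Nm) \<partial>Nm)"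
    by (rule product_nn_integral_insert_rev) (use d m in auto)
  also have "\<dots> = (\<integral>\<^sup>+a. \<integral>\<^sup>+v. F a (v i1) (v i2) \<partial>PiM {i1,i2} (\<lambda>_. Nm) \<partial>Nm)"
    using d by simp
  also have "\<dots> = (\<integral>\<^sup>+a. \<integral>\<^sup>+b. \<integral>\<^sup>+c. F a b c \<partial>Nm \<partial>Nm \<partial>Nm)"
  proof (intro nn_integral_cong PiM2)
    fix a
    have "(\<lambda>(b,c). F a b c) = (\<lambda>(a,b,c). F a b c) \<circ> (\<lambda>(b,c). (a, b, c))" by auto
    also have "\<dots> \<in> borel_measurable (borel \<Otimes>\<^sub>M borel)"
      by (rule measurable_comp[OF _ Fm]) measurable
    finally show "(\<lambda>(b,c). F a b c) \<in> borel_measurable (borel \<Otimes>\<^sub>M borel)" .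
  qed (use d in auto)
  finally show ?thesis by simp
qed

lemma PiM4:
  assumes d: "i0 \<noteq> i1" "i0 \<noteq> i2" "i0 \<noteq> i3" "i1 \<noteq> i2" "i1 \<noteq> i3" "i2 \<noteq> i3"
  and Fm[measurable]: "(\<lambda>(a,b,c,e). F a b c e) \<in> borel_measurable (borel \<Otimes>\<^sub>M borel \<Otimes>\<^sub>M borel \<Otimes>\<^sub>M borel)"
  shows "(\<integral>\<^sup>+v. F (v i0) (v i1) (v i2) (v i3) \<partial>PiM {i0,i1,i2,i3} (\<lambda>_. Nm)) =
         (\<integral>\<^sup>+a. \<integral>\<^sup>+b. \<integral>\<^sup>+c. \<integral>\<^sup>+e. F a b c e \<partial>Nm \<partial>Nm \<partial>Nm \<partial>Nm)"
proof -
  interpret product_sigma_finite "\<lambda>_. Nm" by (rule psf_Nm)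
  have m: "(\<lambda>v. F (v i0) (v i1) (v i2) (v i3)) \<in> borel_measurable (PiM {i0,i1,i2,i3} (\<lambda>_. Nm))"
  proof -
    have "(\<lambda>v. F (v i0) (v i1) (v i2) (v i3)) = (\<lambda>(a,b,c,e). F a b c e) \<circ> (\<lambda>v. (v i0, v i1, v i2, v i3))" by auto
    also have "\<dots> \<in> borel_measurable (PiM {i0,i1,i2,i3} (\<lambda>_. Nm))"
      by (rule measurable_comp[OF _ Fm]) measurable
    finally show ?thesis .
  qed
  have "(\<integral>\<^sup>+v. F (v i0) (v i1) (v i2) (v i3) \<partial>PiM (insert i0 {i1,i2,i3}) (\<lambda>_. Nm)) =
        (\<integral>\<^sup>+a. \<integral>\<^sup>+v. F ((v(i0 := a)) i0) ((v(i0 := a)) i1) ((v(i0 := a)) i2) ((v(i0 := a)) i3) \<partial>PiM {i1,i2,i3} (\<lambda>_. Nm) \<partial>Nm)"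
    by (rule product_nn_integral_insert_rev) (use d m in auto)
  also have "\<dots> = (\<integral>\<^sup>+a. \<integral>\<^sup>+v. F a (v i1) (v i2) (v i3) \<partial>PiM {i1,i2,i3} (\<lambda>_. Nm) \<partial>Nm)"
    using d by simp
  also have "\<dots> = (\<integral>\<^sup>+a. \<integral>\<^sup>+b. \<integral>\<^sup>+c. \<integral>\<^sup>+e. F a b c e \<partial>Nm \<partial>Nm \<partial>Nm \<partial>Nm)"
  proof (intro nn_integral_cong PiM3)
    fix a
    have "(\<lambda>(b,c,e). F a b c e) = (\<lambda>(a,b,c,e). F a b c e) \<circ> (\<lambda>(b,c,e). (a, b, c, e))" by auto
    also have "\<dots> \<in> borel_measurable (borel \<Otimes>\<^sub>M borel \<Otimes>\<^sub>M borel)"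
      by (rule measurable_comp[OF _ Fm]) measurable
    finally show "(\<lambda>(b,c,e). F a b c e) \<in> borel_measurable (borel \<Otimes>\<^sub>M borel \<Otimes>\<^sub>M borel)" .
  qed (use d in auto)
  finally show ?thesis by simp
qed

definition ratio :: "real \<Rightarrow> real \<Rightarrow> real \<Rightarrow> real \<Rightarrow> real \<Rightarrow> real \<Rightarrow> real \<Rightarrow> real \<Rightarrow> real \<Rightarrow> real \<Rightarrow> real \<Rightarrow> real" where
  "ratio s sI m x0 y0 u0 v0 xk yk uk vk =
     (cmod (Complex (s * (sqrt (1 - m\<^sup>2) * xk + m * x0)) (s * (sqrt (1 - m\<^sup>2) * yk + m * y0))))\<^sup>2 /
     (cmod (Complex (sI * (sqrt (1 - m\<^sup>2) * uk + m * u0)) (sI * (sqrt (1 - m\<^sup>2) * vk + m * v0))))\<^sup>2"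

lemma AE_Nm_neq: "AE x in Nm. x \<noteq> c"
  unfolding Nm_def by (subst AE_density) (auto intro: AE_mp[OF AE_lborel_singleton[of c]])

lemma ratio_fail:
  fixes s sI m A \<gamma> :: real
  assumes m: "m\<^sup>2 < 1" and s: "s > 0" "sI > 0" and A: "A = sI\<^sup>2 * \<gamma> / s\<^sup>2"
  assumes Y: "uk + m * u0 / sqrt (1 - m\<^sup>2) \<noteq> 0"
  shows "(\<gamma> < ratio s sI m x0 y0 u0 v0 xk yk uk vk) \<longleftrightarrow>
    A * ((uk + m * u0 / sqrt (1 - m\<^sup>2))\<^sup>2 + (vk + m * v0 / sqrt (1 - m\<^sup>2))\<^sup>2)
      < (xk + m * x0 / sqrt (1 - m\<^sup>2))\<^sup>2 + (yk + m * y0 / sqrt (1 - m\<^sup>2))\<^sup>2"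
proof -
  define r where "r = sqrt (1 - m\<^sup>2)"
  have r: "r > 0" unfolding r_def using m by simp
  define X where "X = (xk + m * x0 / r)\<^sup>2 + (yk + m * y0 / r)\<^sup>2"
  define Yv where "Yv = (uk + m * u0 / r)\<^sup>2 + (vk + m * v0 / r)\<^sup>2"
  have Yp: "Yv > 0" unfolding Yv_def using Y r_def
    by (metis add_pos_nonneg zero_le_power2 zero_less_power2)
  have e1: "(s * (r * xk + m * x0))\<^sup>2 + (s * (r * yk + m * y0))\<^sup>2 = s\<^sup>2 * r\<^sup>2 * X"
    unfolding X_def using r by (simp add: field_simps power2_eq_square)
  have e2: "(sI * (r * uk + m * u0))\<^sup>2 + (sI * (r * vk + m * v0))\<^sup>2 = sI\<^sup>2 * r\<^sup>2 * Yv"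
    unfolding Yv_def using r by (simp add: field_simps power2_eq_square)
  have rat: "ratio s sI m x0 y0 u0 v0 xk yk uk vk = (s\<^sup>2 * r\<^sup>2 * X) / (sI\<^sup>2 * r\<^sup>2 * Yv)"
  proof -
    have Xn: "X \<ge> 0" unfolding X_def by simp
    have n1: "0 \<le> s\<^sup>2 * r\<^sup>2 * X" using Xn by simp
    have n2: "0 \<le> sI\<^sup>2 * r\<^sup>2 * Yv" using Yp by simp
    show ?thesis
      unfolding ratio_def r_def[symmetric] complex_norm e1 e2 real_sqrt_pow2[OF n1] real_sqrt_pow2[OF n2] ..
  qed
  have "(\<gamma> < (s\<^sup>2 * r\<^sup>2 * X) / (sI\<^sup>2 * r\<^sup>2 * Yv)) \<longleftrightarrow> \<gamma> * (sI\<^sup>2 * r\<^sup>2 * Yv) < s\<^sup>2 * r\<^sup>2 * X"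
    using s r Yp by (simp add: pos_less_divide_eq)
  also have "\<dots> \<longleftrightarrow> A * Yv < X"
  proof -
    have eq: "\<gamma> * (sI\<^sup>2 * r\<^sup>2 * Yv) = (s\<^sup>2 * r\<^sup>2) * (A * Yv)" unfolding A using s by (simp add: field_simps)
    have pos: "s\<^sup>2 * r\<^sup>2 > 0" using s r by simp
    show ?thesis unfolding eq using mult_less_cancel_left_pos[OF pos, of "A * Yv" X] by (simp add: mult.assoc)
  qed
  finally show ?thesis unfolding rat X_def Yv_def r_def .
qed

lemma fail_nested:
  fixes s sI m A \<gamma> x0 y0 u0 v0 :: real
  assumes m: "m\<^sup>2 < 1" and s: "s > 0" "sI > 0" and g: "\<gamma> > 0" and A: "A = sI\<^sup>2 * \<gamma> / s\<^sup>2"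
  shows "ennreal (1 / (1 + A) * exp (- (A * (m\<^sup>2 / (1 - m\<^sup>2) * (u0\<^sup>2 + v0\<^sup>2)) / (1 + A))))
     \<le> (\<integral>\<^sup>+a. \<integral>\<^sup>+b. \<integral>\<^sup>+c. \<integral>\<^sup>+e. indicator {r. \<gamma> < r} (ratio s sI m x0 y0 u0 v0 e c b a) \<partial>Nm \<partial>Nm \<partial>Nm \<partial>Nm)"
proof -
  define r where "r = sqrt (1 - m\<^sup>2)"
  have r: "r > 0" "r\<^sup>2 = 1 - m\<^sup>2" unfolding r_def using m by auto
  define p1 where "p1 = m * x0 / r"
  define p2 where "p2 = m * y0 / r"
  define q1 where "q1 = m * u0 / r"
  define q2 where "q2 = m * v0 / r"
  have Ap: "A > 0" unfolding A using s g by simp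
  have inner: "ennreal (exp (- (A * ((b + q1)\<^sup>2 + (a + q2)\<^sup>2))))
      \<le> (\<integral>\<^sup>+c. \<integral>\<^sup>+e. indicator {r. \<gamma> < r} (ratio s sI m x0 y0 u0 v0 e c b a) \<partial>Nm \<partial>Nm)"
    if b: "b \<noteq> - q1" for a b
  proof -
    define t where "t = A * ((b + q1)\<^sup>2 + (a + q2)\<^sup>2)"
    have t0: "t \<ge> 0" unfolding t_def using Ap by simp
    have Y: "b + m * u0 / sqrt (1 - m\<^sup>2) \<noteq> 0" using b unfolding q1_def r_def by auto
    have "(\<integral>\<^sup>+e. indicator {r. \<gamma> < r} (ratio s sI m x0 y0 u0 v0 e c b a) \<partial>Nm) =
          emeasure Nm {e. t < (c + p2)\<^sup>2 + (e + p1)\<^sup>2}" for c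
    proof -
      have "(\<integral>\<^sup>+e. indicator {r. \<gamma> < r} (ratio s sI m x0 y0 u0 v0 e c b a) \<partial>Nm) =
            (\<integral>\<^sup>+e. indicator {e. t < (c + p2)\<^sup>2 + (e + p1)\<^sup>2} e \<partial>Nm)"
      proof (intro nn_integral_cong)
        fix e
        have "(\<gamma> < ratio s sI m x0 y0 u0 v0 e c b a) \<longleftrightarrow> t < (c + p2)\<^sup>2 + (e + p1)\<^sup>2"
          using ratio_fail[OF m s A Y, of x0 y0 v0 e c a]
          unfolding t_def p1_def p2_def q1_def q2_def r_def by (simp add: add.commute)
        then show "indicator {r. \<gamma> < r} (ratio s sI m x0 y0 u0 v0 e c b a) = (indicator {e. t < (c + p2)\<^sup>2 + (e + p1)\<^sup>2} e :: ennreal)"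
          by (simp add: indicator_def)
      qed
      also have "\<dots> = emeasure Nm {e. t < (c + p2)\<^sup>2 + (e + p1)\<^sup>2}"
        by (rule nn_integral_indicator) simp
      finally show ?thesis .
    qed
    then have "(\<integral>\<^sup>+c. \<integral>\<^sup>+e. indicator {r. \<gamma> < r} (ratio s sI m x0 y0 u0 v0 e c b a) \<partial>Nm \<partial>Nm) =
          (\<integral>\<^sup>+c. emeasure Nm {e. t < (c + p2)\<^sup>2 + (e + p1)\<^sup>2} \<partial>Nm)" by simp
    moreover have "ennreal (exp (- t)) \<le> (\<integral>\<^sup>+c. emeasure Nm {e. t < (c + p2)\<^sup>2 + (e + p1)\<^sup>2} \<partial>Nm)"
      by (rule tail2D[OF t0])
    ultimately show ?thesis unfolding t_def by simp
  qed
  have step1: "(\<integral>\<^sup>+a. \<integral>\<^sup>+b. ennreal (exp (- (A * ((b + q1)\<^sup>2 + (a + q2)\<^sup>2)))) \<partial>Nm \<partial>Nm)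
     \<le> (\<integral>\<^sup>+a. \<integral>\<^sup>+b. \<integral>\<^sup>+c. \<integral>\<^sup>+e. indicator {r. \<gamma> < r} (ratio s sI m x0 y0 u0 v0 e c b a) \<partial>Nm \<partial>Nm \<partial>Nm \<partial>Nm)"
  proof (rule nn_integral_mono)
    fix a
    show "(\<integral>\<^sup>+b. ennreal (exp (- (A * ((b + q1)\<^sup>2 + (a + q2)\<^sup>2)))) \<partial>Nm)
      \<le> (\<integral>\<^sup>+b. \<integral>\<^sup>+c. \<integral>\<^sup>+e. indicator {r. \<gamma> < r} (ratio s sI m x0 y0 u0 v0 e c b a) \<partial>Nm \<partial>Nm \<partial>Nm)"
      by (rule nn_integral_mono_AE, use AE_Nm_neq[of "- q1"] in eventually_elim) (rule inner)
  qed
  have step2: "(\<integral>\<^sup>+a. \<integral>\<^sup>+b. ennreal (exp (- (A * ((b + q1)\<^sup>2 + (a + q2)\<^sup>2)))) \<partial>Nm \<partial>Nm)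
     = ennreal (exp (-(A * q1\<^sup>2 / (1 + A))) / sqrt (1 + A)) * ennreal (exp (-(A * q2\<^sup>2 / (1 + A))) / sqrt (1 + A))"
  proof -
    have "(\<integral>\<^sup>+a. \<integral>\<^sup>+b. ennreal (exp (- (A * ((b + q1)\<^sup>2 + (a + q2)\<^sup>2)))) \<partial>Nm \<partial>Nm) =
          (\<integral>\<^sup>+a. (\<integral>\<^sup>+b. ennreal (exp (-(A * (b + q1)\<^sup>2))) \<partial>Nm) * ennreal (exp (-(A * (a + q2)\<^sup>2))) \<partial>Nm)"
    proof (intro nn_integral_cong)
      fix a
      have "(\<integral>\<^sup>+b. ennreal (exp (- (A * ((b + q1)\<^sup>2 + (a + q2)\<^sup>2)))) \<partial>Nm) =
            (\<integral>\<^sup>+b. ennreal (exp (-(A * (b + q1)\<^sup>2))) * ennreal (exp (-(A * (a + q2)\<^sup>2))) \<partial>Nm)"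
        by (intro nn_integral_cong) (simp add: ennreal_mult[symmetric] exp_add[symmetric] algebra_simps)
      also have "\<dots> = (\<integral>\<^sup>+b. ennreal (exp (-(A * (b + q1)\<^sup>2))) \<partial>Nm) * ennreal (exp (-(A * (a + q2)\<^sup>2)))"
        by (rule nn_integral_multc) measurable
      finally show "(\<integral>\<^sup>+b. ennreal (exp (- (A * ((b + q1)\<^sup>2 + (a + q2)\<^sup>2)))) \<partial>Nm) =
            (\<integral>\<^sup>+b. ennreal (exp (-(A * (b + q1)\<^sup>2))) \<partial>Nm) * ennreal (exp (-(A * (a + q2)\<^sup>2)))" .
    qed
    also have "\<dots> = (\<integral>\<^sup>+a. ennreal (exp (-(A * q1\<^sup>2 / (1 + A))) / sqrt (1 + A)) * ennreal (exp (-(A * (a + q2)\<^sup>2))) \<partial>Nm)"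
      by (simp add: laplace1[OF Ap])
    also have "\<dots> = ennreal (exp (-(A * q1\<^sup>2 / (1 + A))) / sqrt (1 + A)) * (\<integral>\<^sup>+a. ennreal (exp (-(A * (a + q2)\<^sup>2))) \<partial>Nm)"
      by (rule nn_integral_cmult) measurable
    also have "\<dots> = ennreal (exp (-(A * q1\<^sup>2 / (1 + A))) / sqrt (1 + A)) * ennreal (exp (-(A * q2\<^sup>2 / (1 + A))) / sqrt (1 + A))"
      by (simp add: laplace1[OF Ap])
    finally show ?thesis .
  qed
  have step3: "ennreal (exp (-(A * q1\<^sup>2 / (1 + A))) / sqrt (1 + A)) * ennreal (exp (-(A * q2\<^sup>2 / (1 + A))) / sqrt (1 + A))
      = ennreal (1 / (1 + A) * exp (- (A * (m\<^sup>2 / (1 - m\<^sup>2) * (u0\<^sup>2 + v0\<^sup>2)) / (1 + A))))"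
  proof -
    have q: "q1\<^sup>2 + q2\<^sup>2 = m\<^sup>2 / (1 - m\<^sup>2) * (u0\<^sup>2 + v0\<^sup>2)"
      unfolding q1_def q2_def using r by (simp add: power_divide power_mult_distrib field_simps)
    have "exp (-(A * q1\<^sup>2 / (1 + A))) / sqrt (1 + A) * (exp (-(A * q2\<^sup>2 / (1 + A))) / sqrt (1 + A))
        = 1 / (1 + A) * exp (- (A * (q1\<^sup>2 + q2\<^sup>2) / (1 + A)))"
    proof -
      have "sqrt (1 + A) * sqrt (1 + A) = 1 + A" using Ap by simp
      moreover have "exp (-(A * q1\<^sup>2 / (1 + A))) * exp (-(A * q2\<^sup>2 / (1 + A))) = exp (- (A * (q1\<^sup>2 + q2\<^sup>2) / (1 + A)))"
        by (simp add: exp_add[symmetric] add_divide_distrib distrib_left)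
      ultimately show ?thesis by (simp add: field_simps)
    qed
    then show ?thesis unfolding q[symmetric] using Ap by (simp add: ennreal_mult[symmetric])
  qed
  show ?thesis using step1 step2 step3 by simp
qed

lemma ratio_alt: "ratio s sI m x0 y0 u0 v0 xk yk uk vk =
     ((s * (sqrt (1 - m\<^sup>2) * xk + m * x0))\<^sup>2 + (s * (sqrt (1 - m\<^sup>2) * yk + m * y0))\<^sup>2) /
     ((sI * (sqrt (1 - m\<^sup>2) * uk + m * u0))\<^sup>2 + (sI * (sqrt (1 - m\<^sup>2) * vk + m * v0))\<^sup>2)"
  unfolding ratio_def complex_norm by (simp add: add_nonneg_nonneg)

definition hfun :: "real \<Rightarrow> real \<Rightarrow> real \<Rightarrow> real" where
  "hfun a m z = 1 - 1 / (a + 1) * exp (- (1 / (a + 1)) * (m\<^sup>2 / (1 - m\<^sup>2)) * a * z) /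
                     (1 + 4 / (a + 1) * (m\<^sup>2 / (1 - m\<^sup>2)) * a * z)"

lemma hfun_ge:
  assumes m: "m\<^sup>2 < 1" and A: "A > 0" and z: "z \<ge> 0"
  shows "1 - 1 / (1 + A) * exp (- (A * (m\<^sup>2 / (1 - m\<^sup>2) * z) / (1 + A))) \<le> hfun A m z"
proof -
  define c where "c = m\<^sup>2 / (1 - m\<^sup>2)"
  have c: "c \<ge> 0" unfolding c_def using m by simp
  define L where "L = 1 / (1 + A) * exp (- (A * (c * z) / (1 + A)))"
  have L: "L \<ge> 0" unfolding L_def using A by simp
  have D: "1 + 4 / (A + 1) * c * A * z \<ge> 1" using A c z by simp
  have e: "- (1 / (A + 1)) * c * A * z = - (A * (c * z) / (1 + A))" using A by (simp add: field_simps)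
  have "hfun A m z = 1 - L / (1 + 4 / (A + 1) * c * A * z)"
    unfolding hfun_def L_def c_def[symmetric] e by (simp add: add.commute)
  moreover have "L / (1 + 4 / (A + 1) * c * A * z) \<le> L"
    using L D by (simp add: divide_le_eq mult_le_cancel_left1)
  ultimately show ?thesis unfolding L_def c_def by simp
qed

lemma port_bound:
  fixes s sI m A \<gamma> x0 y0 u0 v0 :: real
  assumes m: "m\<^sup>2 < 1" and s: "s > 0" "sI > 0" and g: "\<gamma> > 0" and A: "A = sI\<^sup>2 * \<gamma> / s\<^sup>2"
    and d: "i0 \<noteq> i1" "i0 \<noteq> i2" "i0 \<noteq> i3" "i1 \<noteq> i2" "i1 \<noteq> i3" "i2 \<noteq> i3"
  shows "emeasure (PiM {i0,i1,i2,i3} (\<lambda>_. Nm))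
     {v \<in> space (PiM {i0,i1,i2,i3} (\<lambda>_. Nm)). ratio s sI m x0 y0 u0 v0 (v i3) (v i2) (v i1) (v i0) \<le> \<gamma>}
     \<le> ennreal (hfun A m (u0\<^sup>2 + v0\<^sup>2))"
proof -
  let ?P = "PiM {i0,i1,i2,i3} (\<lambda>_. Nm)"
  interpret P: prob_space ?P by (rule prob_space_PiM) (rule prob_Nm)
  have Ap: "A > 0" unfolding A using s g by simp
  define FAIL where "FAIL = {v \<in> space ?P. \<gamma> < ratio s sI m x0 y0 u0 v0 (v i3) (v i2) (v i1) (v i0)}"
  have Fm: "FAIL \<in> sets ?P" unfolding FAIL_def ratio_alt by measurable
  have ok: "{v \<in> space ?P. ratio s sI m x0 y0 u0 v0 (v i3) (v i2) (v i1) (v i0) \<le> \<gamma>} = space ?P - FAIL"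
    unfolding FAIL_def by auto
  define F where "F a b c e = (indicator {r. \<gamma> < r} (ratio s sI m x0 y0 u0 v0 e c b a) :: ennreal)" for a b c e
  have Fmeas: "(\<lambda>(a,b,c,e). F a b c e) \<in> borel_measurable (borel \<Otimes>\<^sub>M borel \<Otimes>\<^sub>M borel \<Otimes>\<^sub>M borel)"
    unfolding F_def ratio_alt by measurable
  have "emeasure ?P FAIL = (\<integral>\<^sup>+v. indicator FAIL v \<partial>?P)" using Fm by simp
  also have "\<dots> = (\<integral>\<^sup>+v. F (v i0) (v i1) (v i2) (v i3) \<partial>?P)"
    by (intro nn_integral_cong) (auto simp: FAIL_def F_def indicator_def)
  also have "\<dots> = (\<integral>\<^sup>+a. \<integral>\<^sup>+b. \<integral>\<^sup>+c. \<integral>\<^sup>+e. F a b c e \<partial>Nm \<partial>Nm \<partial>Nm \<partial>Nm)"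
    by (rule PiM4[OF d Fmeas])
  finally have fail: "ennreal (1 / (1 + A) * exp (- (A * (m\<^sup>2 / (1 - m\<^sup>2) * (u0\<^sup>2 + v0\<^sup>2)) / (1 + A)))) \<le> emeasure ?P FAIL"
    using fail_nested[OF m s g A, of u0 v0 x0 y0] unfolding F_def by simp
  define L where "L = 1 / (1 + A) * exp (- (A * (m\<^sup>2 / (1 - m\<^sup>2) * (u0\<^sup>2 + v0\<^sup>2)) / (1 + A)))"
  have L: "0 \<le> L" unfolding L_def using Ap by simp
  have "emeasure ?P (space ?P - FAIL) = 1 - emeasure ?P FAIL"
    using emeasure_compl[OF Fm] P.emeasure_finite[of FAIL] P.emeasure_space_1 by (simp add: top_unique)
  also have "\<dots> \<le> 1 - ennreal L" using fail unfolding L_def by (rule ennreal_minus_mono[OF order_refl])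
  also have "\<dots> = ennreal (1 - L)" using L by (simp add: ennreal_minus[symmetric])
  also have "\<dots> \<le> ennreal (hfun A m (u0\<^sup>2 + v0\<^sup>2))"
    unfolding L_def by (rule ennreal_leI, rule hfun_ge[OF m Ap]) simp
  finally show ?thesis unfolding ok .
qed

lemma indep_step:
  assumes P: "prob_space M"
    and ind: "prob_space.indep_var M Ma W Mb V"
    and fm: "f \<in> borel_measurable (Ma \<Otimes>\<^sub>M Mb)"
    and gm: "g \<in> borel_measurable Ma"
    and bound: "\<And>w. w \<in> space Ma \<Longrightarrow> (\<integral>\<^sup>+v. f (w, v) \<partial>distr M Mb V) \<le> g w"
  shows "(\<integral>\<^sup>+\<omega>. f (W \<omega>, V \<omega>) \<partial>M) \<le> (\<integral>\<^sup>+\<omega>. g (W \<omega>) \<partial>M)"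
proof -
  interpret prob_space M by (rule P)
  have eq: "random_variable Ma W" "random_variable Mb V"
    "distr M Ma W \<Otimes>\<^sub>M distr M Mb V = distr M (Ma \<Otimes>\<^sub>M Mb) (\<lambda>x. (W x, V x))"
    using ind[unfolded indep_var_distribution_eq] by auto
  interpret DW: prob_space "distr M Ma W" by (rule prob_space_distr[OF eq(1)])
  interpret DV: prob_space "distr M Mb V" by (rule prob_space_distr[OF eq(2)])
  interpret DP: pair_sigma_finite "distr M Ma W" "distr M Mb V"
    by (intro pair_sigma_finite.intro DW.sigma_finite_measure_axioms DV.sigma_finite_measure_axioms)
  have "(\<integral>\<^sup>+\<omega>. f (W \<omega>, V \<omega>) \<partial>M) = (\<integral>\<^sup>+p. f p \<partial>distr M (Ma \<Otimes>\<^sub>M Mb) (\<lambda>x. (W x, V x)))"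
    by (rule nn_integral_distr[symmetric]) (use eq fm in auto)
  also have "\<dots> = (\<integral>\<^sup>+p. f p \<partial>(distr M Ma W \<Otimes>\<^sub>M distr M Mb V))" by (simp add: eq(3))
  also have "\<dots> = (\<integral>\<^sup>+w. \<integral>\<^sup>+v. f (w, v) \<partial>distr M Mb V \<partial>distr M Ma W)"
  proof (rule DV.nn_integral_fst[symmetric])
    show "f \<in> borel_measurable (distr M Ma W \<Otimes>\<^sub>M distr M Mb V)"
      using fm by (simp cong: measurable_cong_sets)
  qed
  also have "\<dots> \<le> (\<integral>\<^sup>+w. g w \<partial>distr M Ma W)"
    by (rule nn_integral_mono) (simp add: bound)
  also have "\<dots> = (\<integral>\<^sup>+\<omega>. g (W \<omega>) \<partial>M)"
    by (rule nn_integral_distr) (use eq gm in auto)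
  finally show ?thesis .
qed

locale fa_setup =
  fixes M :: "'a measure"
    and N :: nat and W \<sigma> \<sigma>I \<gamma> :: real
    and G :: "nat \<Rightarrow> nat \<Rightarrow> 'a \<Rightarrow> real"
  assumes P: "prob_space M"
    and N2: "N \<ge> 2" and Wp: "W > 0" and sp: "\<sigma> > 0" and sIp: "\<sigma>I > 0" and gp: "\<gamma> > 0"
    and indep: "prob_space.indep_vars M (\<lambda>_. borel) (\<lambda>(t, i). G t i) ({..<4} \<times> {0..N})"
    and gauss: "\<And>t i. t < 4 \<Longrightarrow> i \<le> N \<Longrightarrow>
                  distributed M lborel (G t i) (normal_density 0 (sqrt (1/2)))"
begin

sublocale prob_space M by (rule P)

abbreviation "X \<equiv> (\<lambda>(t, i). G t i)"
abbreviation "II \<equiv> {..<4::nat} \<times> {0..N}"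

lemma rvX: "p \<in> II \<Longrightarrow> X p \<in> borel_measurable M"
proof -
  assume "p \<in> II"
  then obtain t i where p: "p = (t, i)" "t < 4" "i \<le> N" by auto
  have "G t i \<in> measurable M lborel" using gauss[OF p(2,3)] by (rule distributed_measurable)
  then show ?thesis unfolding p by (simp cong: measurable_cong_sets)
qed

lemma distrX: "p \<in> II \<Longrightarrow> distr M borel (X p) = Nm"
proof -
  assume "p \<in> II"
  then obtain t i where p: "p = (t, i)" "t < 4" "i \<le> N" by auto
  have "distr M lborel (G t i) = Nm"
    using distributed_distr_eq_density[OF gauss[OF p(2,3)]] unfolding Nm_def .
  moreover have "distr M borel (G t i) = distr M lborel (G t i)"
    by (rule distr_cong) auto
  ultimately show ?thesis unfolding p by simp
qed

lemma distr_restrict: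
  assumes J: "J \<subseteq> II" "J \<noteq> {}"
  shows "distr M (PiM J (\<lambda>_. borel)) (\<lambda>\<omega>. \<lambda>i\<in>J. X i \<omega>) = PiM J (\<lambda>_. Nm)"
proof -
  have ind: "indep_vars (\<lambda>_. borel) X J" by (rule indep_vars_subset[OF indep J(1)])
  have "distr M (PiM J (\<lambda>_. borel)) (\<lambda>\<omega>. \<lambda>i\<in>J. X i \<omega>) = PiM J (\<lambda>i. distr M borel (X i))"
  proof -
    have rv: "\<And>i. i \<in> J \<Longrightarrow> random_variable borel (X i)" using J rvX by auto
    show ?thesis using ind indep_vars_iff_distr_eq_PiM'[OF J(2) rv] by simp
  qed
  also have "\<dots> = PiM J (\<lambda>_. Nm)"
    by (rule PiM_cong) (use J distrX in auto)
  finally show ?thesis .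
qed

lemma indep_restrict:
  assumes "J \<inter> K = {}" "J \<subseteq> II" "K \<subseteq> II"
  shows "indep_var (PiM J (\<lambda>_. borel)) (\<lambda>\<omega>. restrict (\<lambda>i. X i \<omega>) J) (PiM K (\<lambda>_. borel)) (\<lambda>\<omega>. restrict (\<lambda>i. X i \<omega>) K)"
  by (rule indep_var_restrict[OF indep assms])

lemma meas_restrict: "J \<subseteq> II \<Longrightarrow> (\<lambda>\<omega>. restrict (\<lambda>i. X i \<omega>) J) \<in> measurable M (PiM J (\<lambda>_. borel))"
  by (intro measurable_restrict) (use rvX in auto)

definition "Aa = \<sigma>I\<^sup>2 * \<gamma> / \<sigma>\<^sup>2"
definition "mu k = fa_mu N W k"
definition "rk k x = ratio \<sigma> \<sigma>I (mu k) (x(0::nat,0::nat)) (x(1,0)) (x(2,0)) (x(3,0)) (x(0,k)) (x(1,k)) (x(2,k)) (x(3,k))"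
definition "r1 x = (cmod (Complex (\<sigma> * x(0::nat,0::nat)) (\<sigma> * x(1,0))))\<^sup>2 / (cmod (Complex (\<sigma>I * x(2,0)) (\<sigma>I * x(3,0))))\<^sup>2"
definition "Hk k x = ennreal (hfun Aa (mu k) ((x(2::nat,0::nat))\<^sup>2 + (x(3,0))\<^sup>2))"
definition "Psi S T x = (indicator {r. r \<le> \<gamma>} (r1 x) * (\<Prod>j\<in>S. indicator {r. r \<le> \<gamma>} (rk j x)) * (\<Prod>j\<in>T. Hk j x) :: ennreal)"

lemma Aa_pos: "Aa > 0" unfolding Aa_def using sp sIp gp by simp

lemma mu_sq: "k \<in> {2..N} \<Longrightarrow> (mu k)\<^sup>2 < 1"
proof -
  assume k: "k \<in> {2..N}"
  have "real (k - 1) > 0" "real (N - 1) > 0" using k N2 by auto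
  then have "2 * pi * real (k - 1) / real (N - 1) * W \<noteq> 0" using Wp by simp
  then show ?thesis unfolding mu_def fa_mu_def by (rule besselJ0_sq_lt1)
qed

lemma Psi_dep:
  assumes "\<And>t. t < 4 \<Longrightarrow> x (t, 0) = y (t, 0)" "\<And>j t. j \<in> S \<Longrightarrow> t < 4 \<Longrightarrow> x (t, j) = y (t, j)"
  shows "Psi S T x = Psi S T y"
proof -
  have "r1 x = r1 y" unfolding r1_def using assms(1) by simp
  moreover have "(\<Prod>j\<in>S. indicator {r. r \<le> \<gamma>} (rk j x)) = (\<Prod>j\<in>S. indicator {r. r \<le> \<gamma>} (rk j y) :: ennreal)"
    by (intro prod.cong refl) (simp add: rk_def assms)
  moreover have "(\<Prod>j\<in>T. Hk j x) = (\<Prod>j\<in>T. Hk j y)"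
    by (intro prod.cong refl) (simp add: Hk_def assms(1))
  ultimately show ?thesis unfolding Psi_def by simp
qed

lemma comp_meas: "(p :: nat \<times> nat) \<in> J \<Longrightarrow> (\<lambda>x. x p) \<in> borel_measurable (PiM J (\<lambda>_. (borel :: real measure)))"
  by (rule measurable_component_singleton)

lemma Psi_meas:
  fixes J :: "(nat \<times> nat) set"
  assumes J0: "\<And>t. t < 4 \<Longrightarrow> (t, 0) \<in> J" and JS: "\<And>j t. j \<in> S \<Longrightarrow> t < 4 \<Longrightarrow> (t, j) \<in> J"
  shows "Psi S T \<in> borel_measurable (PiM J (\<lambda>_. borel))"
proof -
  have [measurable]: "(\<lambda>x::nat\<times>nat\<Rightarrow>real. x (0, 0)) \<in> borel_measurable (PiM J (\<lambda>_. borel))"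
     "(\<lambda>x::nat\<times>nat\<Rightarrow>real. x (1, 0)) \<in> borel_measurable (PiM J (\<lambda>_. borel))"
     "(\<lambda>x::nat\<times>nat\<Rightarrow>real. x (2, 0)) \<in> borel_measurable (PiM J (\<lambda>_. borel))"
     "(\<lambda>x::nat\<times>nat\<Rightarrow>real. x (3, 0)) \<in> borel_measurable (PiM J (\<lambda>_. borel))"
    by (auto intro!: comp_meas J0)
  have r1m[measurable]: "r1 \<in> borel_measurable (PiM J (\<lambda>_. borel))"
    unfolding r1_def complex_norm by measurable
  have Hm: "Hk j \<in> borel_measurable (PiM J (\<lambda>_. borel))" for j
    unfolding Hk_def hfun_def by measurable
  have rkm: "(\<lambda>x. indicator {r. r \<le> \<gamma>} (rk j x) :: ennreal) \<in> borel_measurable (PiM J (\<lambda>_. borel))"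
    if j: "j \<in> S" for j
  proof -
    have [measurable]: "(\<lambda>x::nat\<times>nat\<Rightarrow>real. x (0, j)) \<in> borel_measurable (PiM J (\<lambda>_. borel))"
     "(\<lambda>x::nat\<times>nat\<Rightarrow>real. x (1, j)) \<in> borel_measurable (PiM J (\<lambda>_. borel))"
     "(\<lambda>x::nat\<times>nat\<Rightarrow>real. x (2, j)) \<in> borel_measurable (PiM J (\<lambda>_. borel))"
     "(\<lambda>x::nat\<times>nat\<Rightarrow>real. x (3, j)) \<in> borel_measurable (PiM J (\<lambda>_. borel))"
      by (auto intro!: comp_meas JS[OF j])
    show ?thesis unfolding rk_def ratio_alt by measurable
  qed
  show ?thesis unfolding Psi_def
    by (intro borel_measurable_times_ennreal borel_measurable_prod_ennreal rkm Hm) measurable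
qed

lemma step:
  assumes k: "k \<in> {2..N}" and S: "S \<subseteq> {2..N}" "k \<notin> S" and T: "T \<subseteq> {2..N}"
  shows "(\<integral>\<^sup>+\<omega>. Psi S T (\<lambda>i. X i \<omega>) * indicator {r. r \<le> \<gamma>} (rk k (\<lambda>i. X i \<omega>)) \<partial>M)
       \<le> (\<integral>\<^sup>+\<omega>. Psi S T (\<lambda>i. X i \<omega>) * Hk k (\<lambda>i. X i \<omega>) \<partial>M)"
proof -
  define J where "J = {..<4::nat} \<times> insert 0 S"
  define K where "K = {(3::nat, k), (2, k), (1, k), (0, k)}"
  have JI: "J \<subseteq> II" using S unfolding J_def by auto
  have KI: "K \<subseteq> II" using k unfolding K_def by auto
  have JK: "J \<inter> K = {}" using S k unfolding J_def K_def by auto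
  have Kne: "K \<noteq> {}" unfolding K_def by simp
  have J0: "\<And>t. t < 4 \<Longrightarrow> (t, 0) \<in> J" and JS: "\<And>j t. j \<in> S \<Longrightarrow> t < 4 \<Longrightarrow> (t, j) \<in> J"
    unfolding J_def by auto
  have Psim[measurable]: "Psi S T \<in> borel_measurable (PiM J (\<lambda>_. borel))" by (rule Psi_meas[OF J0 JS])
  have [measurable]: "(\<lambda>x::nat\<times>nat\<Rightarrow>real. x (0, 0)) \<in> borel_measurable (PiM J (\<lambda>_. borel))"
     "(\<lambda>x::nat\<times>nat\<Rightarrow>real. x (1, 0)) \<in> borel_measurable (PiM J (\<lambda>_. borel))"
     "(\<lambda>x::nat\<times>nat\<Rightarrow>real. x (2, 0)) \<in> borel_measurable (PiM J (\<lambda>_. borel))"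
     "(\<lambda>x::nat\<times>nat\<Rightarrow>real. x (3, 0)) \<in> borel_measurable (PiM J (\<lambda>_. borel))"
    by (auto intro!: comp_meas J0)
  have [measurable]: "(\<lambda>x::nat\<times>nat\<Rightarrow>real. x (0, k)) \<in> borel_measurable (PiM K (\<lambda>_. borel))"
     "(\<lambda>x::nat\<times>nat\<Rightarrow>real. x (1, k)) \<in> borel_measurable (PiM K (\<lambda>_. borel))"
     "(\<lambda>x::nat\<times>nat\<Rightarrow>real. x (2, k)) \<in> borel_measurable (PiM K (\<lambda>_. borel))"
     "(\<lambda>x::nat\<times>nat\<Rightarrow>real. x (3, k)) \<in> borel_measurable (PiM K (\<lambda>_. borel))"
    by (auto intro!: comp_meas simp: K_def)
  have Hkm[measurable]: "Hk k \<in> borel_measurable (PiM J (\<lambda>_. borel))"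
    unfolding Hk_def hfun_def by measurable
  define f where "f p = Psi S T (fst p) * indicator {r. r \<le> \<gamma>}
      (ratio \<sigma> \<sigma>I (mu k) (fst p (0,0)) (fst p (1,0)) (fst p (2,0)) (fst p (3,0))
             (snd p (0,k)) (snd p (1,k)) (snd p (2,k)) (snd p (3,k)))"
    for p :: "(nat \<times> nat \<Rightarrow> real) \<times> (nat \<times> nat \<Rightarrow> real)"
  define g where "g w = Psi S T w * Hk k w" for w
  have fm: "f \<in> borel_measurable (PiM J (\<lambda>_. borel) \<Otimes>\<^sub>M PiM K (\<lambda>_. borel))"
    unfolding f_def ratio_alt by measurable
  have gm: "g \<in> borel_measurable (PiM J (\<lambda>_. borel))" unfolding g_def by measurable
  have bound: "(\<integral>\<^sup>+v. f (w, v) \<partial>distr M (PiM K (\<lambda>_. borel)) (\<lambda>\<omega>. restrict (\<lambda>i. X i \<omega>) K)) \<le> g w"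
    if w: "w \<in> space (PiM J (\<lambda>_. borel))" for w
  proof -
    have D: "distr M (PiM K (\<lambda>_. borel)) (\<lambda>\<omega>. restrict (\<lambda>i. X i \<omega>) K) = PiM K (\<lambda>_. Nm)"
      using distr_restrict[OF KI Kne] by simp
    let ?R = "\<lambda>v. ratio \<sigma> \<sigma>I (mu k) (w (0,0)) (w (1,0)) (w (2,0)) (w (3,0)) (v (0,k)) (v (1,k)) (v (2,k)) (v (3,k))"
    have Sm: "{v \<in> space (PiM K (\<lambda>_. Nm)). ?R v \<le> \<gamma>} \<in> sets (PiM K (\<lambda>_. Nm))"
    proof -
      have "sets (PiM K (\<lambda>_. Nm)) = sets (PiM K (\<lambda>_. borel))" by (rule sets_PiM_cong) auto
      moreover have "space (PiM K (\<lambda>_. Nm)) = space (PiM K (\<lambda>_. borel))" by (simp add: space_PiM)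
      moreover have "{v \<in> space (PiM K (\<lambda>_. borel)). ?R v \<le> \<gamma>} \<in> sets (PiM K (\<lambda>_. borel))"
        unfolding ratio_alt by measurable
      ultimately show ?thesis by simp
    qed
    have "(\<integral>\<^sup>+v. f (w, v) \<partial>PiM K (\<lambda>_. Nm)) = (\<integral>\<^sup>+v. Psi S T w * indicator {v \<in> space (PiM K (\<lambda>_. Nm)). ?R v \<le> \<gamma>} v \<partial>PiM K (\<lambda>_. Nm))"
      by (intro nn_integral_cong) (simp add: f_def indicator_def)
    also have "\<dots> = Psi S T w * emeasure (PiM K (\<lambda>_. Nm)) {v \<in> space (PiM K (\<lambda>_. Nm)). ?R v \<le> \<gamma>}"
      using Sm by (simp add: nn_integral_cmult_indicator)
    also have "\<dots> \<le> Psi S T w * ennreal (hfun Aa (mu k) ((w (2,0))\<^sup>2 + (w (3,0))\<^sup>2))"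
    proof (rule mult_left_mono)
      show "emeasure (PiM K (\<lambda>_. Nm)) {v \<in> space (PiM K (\<lambda>_. Nm)). ?R v \<le> \<gamma>}
          \<le> ennreal (hfun Aa (mu k) ((w (2,0))\<^sup>2 + (w (3,0))\<^sup>2))"
        unfolding K_def by (rule port_bound[OF mu_sq[OF k] sp sIp gp Aa_def]) auto
    qed simp
    finally show ?thesis unfolding D g_def Hk_def .
  qed
  have main: "(\<integral>\<^sup>+\<omega>. f (restrict (\<lambda>i. X i \<omega>) J, restrict (\<lambda>i. X i \<omega>) K) \<partial>M) \<le> (\<integral>\<^sup>+\<omega>. g (restrict (\<lambda>i. X i \<omega>) J) \<partial>M)"
    by (rule indep_step[OF P indep_restrict[OF JK JI KI] fm gm bound])
  have e1: "f (restrict (\<lambda>i. X i \<omega>) J, restrict (\<lambda>i. X i \<omega>) K) =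
      Psi S T (\<lambda>i. X i \<omega>) * indicator {r. r \<le> \<gamma>} (rk k (\<lambda>i. X i \<omega>))" for \<omega>
  proof -
    have "Psi S T (restrict (\<lambda>i. X i \<omega>) J) = Psi S T (\<lambda>i. X i \<omega>)"
      by (rule Psi_dep) (auto simp: J0 JS)
    moreover have "(0::nat, k) \<in> K" "(1::nat, k) \<in> K" "(2::nat, k) \<in> K" "(3::nat, k) \<in> K"
      unfolding K_def by auto
    moreover have "(0::nat, 0::nat) \<in> J" "(1::nat, 0::nat) \<in> J" "(2::nat, 0::nat) \<in> J" "(3::nat, 0::nat) \<in> J"
      by (auto intro: J0)
    ultimately show ?thesis unfolding f_def rk_def by simp
  qed
  have e2: "g (restrict (\<lambda>i. X i \<omega>) J) = Psi S T (\<lambda>i. X i \<omega>) * Hk k (\<lambda>i. X i \<omega>)" for \<omega>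
  proof -
    have "Psi S T (restrict (\<lambda>i. X i \<omega>) J) = Psi S T (\<lambda>i. X i \<omega>)"
      by (rule Psi_dep) (auto simp: J0 JS)
    moreover have "(2::nat, 0::nat) \<in> J" "(3::nat, 0::nat) \<in> J"
      by (auto intro: J0)
    ultimately show ?thesis unfolding g_def Hk_def by simp
  qed
  show ?thesis using main unfolding e1 e2 .
qed

lemma chain:
  assumes "S \<subseteq> {2..N}"
  shows "(\<integral>\<^sup>+\<omega>. Psi S ({2..N} - S) (\<lambda>i. X i \<omega>) \<partial>M) \<le> (\<integral>\<^sup>+\<omega>. Psi {} {2..N} (\<lambda>i. X i \<omega>) \<partial>M)"
proof -
  have fin: "finite S" using assms finite_subset by blast
  from fin assms show ?thesis
  proof (induction S rule: finite_induct)
    case empty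
    then show ?case by simp
  next
    case (insert k S)
    have k: "k \<in> {2..N}" and S: "S \<subseteq> {2..N}" using insert.prems by auto
    define T where "T = {2..N} - insert k S"
    have T: "T \<subseteq> {2..N}" unfolding T_def by auto
    have kT: "k \<notin> T" unfolding T_def by auto
    have TS: "{2..N} - S = insert k T" unfolding T_def using k insert.hyps by auto
    have "(\<integral>\<^sup>+\<omega>. Psi (insert k S) ({2..N} - insert k S) (\<lambda>i. X i \<omega>) \<partial>M) =
          (\<integral>\<^sup>+\<omega>. Psi S T (\<lambda>i. X i \<omega>) * indicator {r. r \<le> \<gamma>} (rk k (\<lambda>i. X i \<omega>)) \<partial>M)"
      unfolding T_def[symmetric] Psi_def using insert.hyps by (simp add: ac_simps)
    also have "\<dots> \<le> (\<integral>\<^sup>+\<omega>. Psi S T (\<lambda>i. X i \<omega>) * Hk k (\<lambda>i. X i \<omega>) \<partial>M)"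
      by (rule step[OF k S insert.hyps(2) T])
    also have "\<dots> = (\<integral>\<^sup>+\<omega>. Psi S ({2..N} - S) (\<lambda>i. X i \<omega>) \<partial>M)"
    proof -
      have fT: "finite T" using T finite_subset by blast
      show ?thesis unfolding TS Psi_def using kT fT by (simp add: ac_simps)
    qed
    also have "\<dots> \<le> (\<integral>\<^sup>+\<omega>. Psi {} {2..N} (\<lambda>i. X i \<omega>) \<partial>M)"
      by (rule insert.IH[OF S])
    finally show ?case .
  qed
qed

end

lemma hfun_bounds:
  assumes m: "m\<^sup>2 < 1" and A: "A > 0" and z: "z \<ge> 0"
  shows "0 \<le> hfun A m z" "hfun A m z \<le> 1"
proof -
  define c where "c = m\<^sup>2 / (1 - m\<^sup>2)"
  have c: "c \<ge> 0" unfolding c_def using m by simp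
  define D where "D = 1 + 4 / (A + 1) * c * A * z"
  have D: "D \<ge> 1" unfolding D_def using A c z by simp
  have E: "exp (- (1 / (A + 1)) * c * A * z) \<le> 1" using A c z by (simp add: mult_nonneg_nonneg)
  define L where "L = 1 / (A + 1) * exp (- (1 / (A + 1)) * c * A * z) / D"
  have L0: "L \<ge> 0" unfolding L_def using A D by simp
  have L1: "L \<le> 1"
  proof -
    have "1 / (A + 1) * exp (- (1 / (A + 1)) * c * A * z) \<le> 1 * 1"
      using A E by (intro mult_mono) auto
    then have X: "1 / (A + 1) * exp (- (1 / (A + 1)) * c * A * z) \<le> D" using D by simp
    have "0 < D" using D by simp
    then show ?thesis unfolding L_def using X by (simp only: divide_le_eq_1_pos)
  qed
  have h: "hfun A m z = 1 - L" unfolding hfun_def L_def D_def c_def ..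
  show "0 \<le> hfun A m z" "hfun A m z \<le> 1" unfolding h using L0 L1 by auto
qed

context fa_setup
begin

definition "r1f x0 y0 u0 v0 = (cmod (Complex (\<sigma> * x0) (\<sigma> * y0)))\<^sup>2 / (cmod (Complex (\<sigma>I * u0) (\<sigma>I * v0)))\<^sup>2"

lemma r1_alt: "r1 x = r1f (x (0,0)) (x (1,0)) (x (2,0)) (x (3,0))"
  unfolding r1_def r1f_def ..

lemma r1f_le:
  assumes z: "u0\<^sup>2 + v0\<^sup>2 > 0"
  shows "r1f x0 y0 u0 v0 \<le> \<gamma> \<longleftrightarrow> x0\<^sup>2 + y0\<^sup>2 \<le> Aa * (u0\<^sup>2 + v0\<^sup>2)"
proof -
  have "r1f x0 y0 u0 v0 = (\<sigma>\<^sup>2 * (x0\<^sup>2 + y0\<^sup>2)) / (\<sigma>I\<^sup>2 * (u0\<^sup>2 + v0\<^sup>2))"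
    unfolding r1f_def complex_norm by (simp add: power_mult_distrib distrib_left add_nonneg_nonneg)
  also have "\<dots> \<le> \<gamma> \<longleftrightarrow> \<sigma>\<^sup>2 * (x0\<^sup>2 + y0\<^sup>2) \<le> \<gamma> * (\<sigma>I\<^sup>2 * (u0\<^sup>2 + v0\<^sup>2))"
    using z sIp by (simp add: divide_le_eq)
  also have "\<dots> \<longleftrightarrow> x0\<^sup>2 + y0\<^sup>2 \<le> Aa * (u0\<^sup>2 + v0\<^sup>2)"
  proof -
    have e: "\<gamma> * (\<sigma>I\<^sup>2 * (u0\<^sup>2 + v0\<^sup>2)) = \<sigma>\<^sup>2 * (Aa * (u0\<^sup>2 + v0\<^sup>2))"
      unfolding Aa_def using sp by (simp add: field_simps)
    have p: "\<sigma>\<^sup>2 > 0" using sp by simp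
    show ?thesis unfolding e using mult_le_cancel_left_pos[OF p] by blast
  qed
  finally show ?thesis by simp
qed

lemma sets_PiM_Nm: "sets (PiM K (\<lambda>_. Nm)) = sets (PiM K (\<lambda>_. borel))"
  by (rule sets_PiM_cong) auto

definition "Phi z = (if z \<le> 0 then 1 else (1 - exp (- Aa * z)) * (\<Prod>j\<in>{2..N}. hfun Aa (mu j) z))"

lemma Phi_nonneg: "0 \<le> Phi z"
proof (cases "z \<le> 0")
  case False
  have "0 \<le> 1 - exp (- Aa * z)" using False Aa_pos by (simp add: mult_pos_pos)
  moreover have "0 \<le> (\<Prod>j\<in>{2..N}. hfun Aa (mu j) z)"
    using hfun_bounds(1)[OF mu_sq Aa_pos] False by (intro prod_nonneg) auto
  ultimately show ?thesis using False unfolding Phi_def by simp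
qed (simp add: Phi_def)

lemma Phi_meas[measurable]: "Phi \<in> borel_measurable borel"
  unfolding Phi_def hfun_def by measurable

lemma inner1:
  assumes z: "u\<^sup>2 + v\<^sup>2 > 0"
  shows "(\<integral>\<^sup>+a. \<integral>\<^sup>+b. indicator {r. r \<le> \<gamma>} (r1f a b u v) \<partial>Nm \<partial>Nm) = ennreal (1 - exp (- Aa * (u\<^sup>2 + v\<^sup>2)))"
proof -
  define t where "t = Aa * (u\<^sup>2 + v\<^sup>2)"
  have t: "t \<ge> 0" unfolding t_def using Aa_pos z by simp
  have "(\<integral>\<^sup>+a. \<integral>\<^sup>+b. indicator {r. r \<le> \<gamma>} (r1f a b u v) \<partial>Nm \<partial>Nm) =
        (\<integral>\<^sup>+a. \<integral>\<^sup>+b. ennreal (indicator {..t} (a\<^sup>2 + b\<^sup>2)) \<partial>Nm \<partial>Nm)"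
    by (intro nn_integral_cong) (simp add: indicator_def r1f_le[OF z] t_def)
  also have "\<dots> = (\<integral>\<^sup>+x. ennreal (exp (- x) * indicator {..t} x) * indicator {0..} x \<partial>lborel)"
    by (rule B1) auto
  also have "\<dots> = (\<integral>\<^sup>+x. ennreal (exp (- x)) * indicator {0..t} x \<partial>lborel)"
    by (intro nn_integral_cong) (auto split: split_indicator)
  also have "\<dots> = ennreal ((- exp (- t)) - (- exp (- 0)))"
    by (rule nn_integral_FTC_Icc) (auto intro!: derivative_eq_intros simp: t)
  finally show ?thesis unfolding t_def by simp
qed

lemma final_bound:
  "(\<integral>\<^sup>+\<omega>. Psi {} {2..N} (\<lambda>i. X i \<omega>) \<partial>M) \<le>
   (\<integral>\<^sup>+z. ennreal (exp (- z) * (1 - exp (- Aa * z)) * (\<Prod>k\<in>{2..N}. hfun Aa (mu k) z)) * indicator {0..} z \<partial>lborel)"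
proof -
  define J where "J = {(2::nat, 0::nat), (3, 0)}"
  define K where "K = {(0::nat, 0::nat), (1, 0)}"
  have JI: "J \<subseteq> II" unfolding J_def by auto
  have KI: "K \<subseteq> II" unfolding K_def by auto
  have JK: "J \<inter> K = {}" unfolding J_def K_def by auto
  have Kne: "K \<noteq> {}" "J \<noteq> {}" unfolding K_def J_def by simp_all
  have [measurable]: "(\<lambda>x::nat\<times>nat\<Rightarrow>real. x (2, 0)) \<in> borel_measurable (PiM J (\<lambda>_. borel))"
     "(\<lambda>x::nat\<times>nat\<Rightarrow>real. x (3, 0)) \<in> borel_measurable (PiM J (\<lambda>_. borel))"
    by (auto intro!: comp_meas simp: J_def)
  have [measurable]: "(\<lambda>x::nat\<times>nat\<Rightarrow>real. x (0, 0)) \<in> borel_measurable (PiM K (\<lambda>_. borel))"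
     "(\<lambda>x::nat\<times>nat\<Rightarrow>real. x (1, 0)) \<in> borel_measurable (PiM K (\<lambda>_. borel))"
    by (auto intro!: comp_meas simp: K_def)
  have Hkm[measurable]: "(\<lambda>w. \<Prod>j\<in>{2..N}. Hk j w) \<in> borel_measurable (PiM J (\<lambda>_. borel))"
    unfolding Hk_def hfun_def by measurable
  define f where "f p = indicator {r. r \<le> \<gamma>} (r1f (snd p (0,0)) (snd p (1,0)) (fst p (2,0)) (fst p (3,0)))
      * (\<Prod>j\<in>{2..N}. Hk j (fst p))"
    for p :: "(nat \<times> nat \<Rightarrow> real) \<times> (nat \<times> nat \<Rightarrow> real)"
  define g where "g w = ennreal (Phi ((w (2::nat,0::nat))\<^sup>2 + (w (3,0))\<^sup>2))" for w
  have fm: "f \<in> borel_measurable (PiM J (\<lambda>_. borel) \<Otimes>\<^sub>M PiM K (\<lambda>_. borel))"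
    unfolding f_def r1f_def complex_norm by measurable
  have gm[measurable]: "g \<in> borel_measurable (PiM J (\<lambda>_. borel))" unfolding g_def by measurable
  have bound: "(\<integral>\<^sup>+v. f (w, v) \<partial>distr M (PiM K (\<lambda>_. borel)) (\<lambda>\<omega>. restrict (\<lambda>i. X i \<omega>) K)) \<le> g w"
    if w: "w \<in> space (PiM J (\<lambda>_. borel))" for w
  proof -
    have D: "distr M (PiM K (\<lambda>_. borel)) (\<lambda>\<omega>. restrict (\<lambda>i. X i \<omega>) K) = PiM K (\<lambda>_. Nm)"
      using distr_restrict[OF KI Kne(1)] by simp
    define u where "u = w (2,0)"
    define v where "v = w (3,0)"
    have Fm: "(\<lambda>(a, b). indicator {r. r \<le> \<gamma>} (r1f a b u v) :: ennreal) \<in> borel_measurable (borel \<Otimes>\<^sub>M borel)"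
      unfolding r1f_def complex_norm by measurable
    have "(\<integral>\<^sup>+x. f (w, x) \<partial>PiM K (\<lambda>_. Nm)) =
          (\<integral>\<^sup>+x. (\<Prod>j\<in>{2..N}. Hk j w) * indicator {r. r \<le> \<gamma>} (r1f (x (0,0)) (x (1,0)) u v) \<partial>PiM K (\<lambda>_. Nm))"
      by (intro nn_integral_cong) (simp add: f_def u_def v_def mult.commute)
    also have "\<dots> = (\<Prod>j\<in>{2..N}. Hk j w) * (\<integral>\<^sup>+x. indicator {r. r \<le> \<gamma>} (r1f (x (0,0)) (x (1,0)) u v) \<partial>PiM K (\<lambda>_. Nm))"
    proof (rule nn_integral_cmult)
      have "(\<lambda>x. indicator {r. r \<le> \<gamma>} (r1f (x (0,0)) (x (1,0)) u v) :: ennreal) \<in> borel_measurable (PiM K (\<lambda>_. borel))"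
        unfolding r1f_def complex_norm by measurable
      then show "(\<lambda>x. indicator {r. r \<le> \<gamma>} (r1f (x (0,0)) (x (1,0)) u v) :: ennreal) \<in> borel_measurable (PiM K (\<lambda>_. Nm))"
        by (subst measurable_cong_sets[OF sets_PiM_Nm refl])
    qed
    also have "(\<integral>\<^sup>+x. indicator {r. r \<le> \<gamma>} (r1f (x (0,0)) (x (1,0)) u v) \<partial>PiM K (\<lambda>_. Nm)) =
               (\<integral>\<^sup>+a. \<integral>\<^sup>+b. indicator {r. r \<le> \<gamma>} (r1f a b u v) \<partial>Nm \<partial>Nm)"
      unfolding K_def by (rule PiM2[OF _ Fm]) simp
    finally have eq: "(\<integral>\<^sup>+x. f (w, x) \<partial>PiM K (\<lambda>_. Nm)) =
        (\<Prod>j\<in>{2..N}. Hk j w) * (\<integral>\<^sup>+a. \<integral>\<^sup>+b. indicator {r. r \<le> \<gamma>} (r1f a b u v) \<partial>Nm \<partial>Nm)" .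
    have Hk_eq: "(\<Prod>j\<in>{2..N}. Hk j w) = ennreal (\<Prod>j\<in>{2..N}. hfun Aa (mu j) (u\<^sup>2 + v\<^sup>2))"
      unfolding Hk_def u_def v_def
      by (rule prod_ennreal) (auto intro!: hfun_bounds(1)[OF mu_sq Aa_pos])
    show ?thesis
    proof (cases "u\<^sup>2 + v\<^sup>2 > 0")
      case True
      have "(\<integral>\<^sup>+x. f (w, x) \<partial>PiM K (\<lambda>_. Nm)) =
            ennreal (\<Prod>j\<in>{2..N}. hfun Aa (mu j) (u\<^sup>2 + v\<^sup>2)) * ennreal (1 - exp (- Aa * (u\<^sup>2 + v\<^sup>2)))"
        unfolding eq Hk_eq inner1[OF True] ..
      also have "\<dots> = ennreal (Phi (u\<^sup>2 + v\<^sup>2))"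
      proof -
        have a0: "0 \<le> 1 - exp (- Aa * (u\<^sup>2 + v\<^sup>2))" using True Aa_pos by simp
        have b0: "0 \<le> (\<Prod>j\<in>{2..N}. hfun Aa (mu j) (u\<^sup>2 + v\<^sup>2))"
          by (intro prod_nonneg) (auto intro!: hfun_bounds(1)[OF mu_sq Aa_pos])
        have "Phi (u\<^sup>2 + v\<^sup>2) = (1 - exp (- Aa * (u\<^sup>2 + v\<^sup>2))) * (\<Prod>j\<in>{2..N}. hfun Aa (mu j) (u\<^sup>2 + v\<^sup>2))"
          using True by (simp add: Phi_def)
        then show ?thesis using ennreal_mult[OF a0 b0] by (simp add: mult.commute)
      qed
      also have "\<dots> = g w" unfolding g_def u_def v_def ..
      finally show ?thesis unfolding D by simp
    next
      case False
      then have z0: "u\<^sup>2 + v\<^sup>2 \<le> 0" by simp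
      interpret Nmp: prob_space Nm by (rule prob_Nm)
      have "(\<integral>\<^sup>+a. \<integral>\<^sup>+b. indicator {r. r \<le> \<gamma>} (r1f a b u v) \<partial>Nm \<partial>Nm) \<le> (\<integral>\<^sup>+a. \<integral>\<^sup>+b. 1 \<partial>Nm \<partial>Nm)"
        by (intro nn_integral_mono) (simp add: indicator_def)
      also have "\<dots> = 1" using Nmp.emeasure_space_1 by simp
      finally have i1: "(\<integral>\<^sup>+a. \<integral>\<^sup>+b. indicator {r. r \<le> \<gamma>} (r1f a b u v) \<partial>Nm \<partial>Nm) \<le> 1" .
      have p1: "(\<Prod>j\<in>{2..N}. hfun Aa (mu j) (u\<^sup>2 + v\<^sup>2)) \<le> 1"
        using hfun_bounds[OF mu_sq Aa_pos] by (intro prod_le_1) auto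
      have "(\<integral>\<^sup>+x. f (w, x) \<partial>PiM K (\<lambda>_. Nm)) \<le> ennreal 1 * 1"
        unfolding eq Hk_eq by (intro mult_mono i1) (use p1 in auto)
      also have "\<dots> = g w" unfolding g_def Phi_def u_def[symmetric] v_def[symmetric] using z0 by simp
      finally show ?thesis unfolding D .
    qed
  qed
  have main: "(\<integral>\<^sup>+\<omega>. f (restrict (\<lambda>i. X i \<omega>) J, restrict (\<lambda>i. X i \<omega>) K) \<partial>M) \<le> (\<integral>\<^sup>+\<omega>. g (restrict (\<lambda>i. X i \<omega>) J) \<partial>M)"
    by (rule indep_step[OF P indep_restrict[OF JK JI KI] fm gm bound])
  have e1: "f (restrict (\<lambda>i. X i \<omega>) J, restrict (\<lambda>i. X i \<omega>) K) = Psi {} {2..N} (\<lambda>i. X i \<omega>)" for \<omega>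
    unfolding f_def Psi_def r1_alt Hk_def by (simp add: J_def K_def)
  have "(\<integral>\<^sup>+\<omega>. g (restrict (\<lambda>i. X i \<omega>) J) \<partial>M) = (\<integral>\<^sup>+w. g w \<partial>distr M (PiM J (\<lambda>_. borel)) (\<lambda>\<omega>. restrict (\<lambda>i. X i \<omega>) J))"
    by (rule nn_integral_distr[symmetric], rule meas_restrict[OF JI], simp)
  also have "\<dots> = (\<integral>\<^sup>+w. g w \<partial>PiM J (\<lambda>_. Nm))"
    using distr_restrict[OF JI Kne(2)] by simp
  also have "\<dots> = (\<integral>\<^sup>+c. \<integral>\<^sup>+d. ennreal (Phi (c\<^sup>2 + d\<^sup>2)) \<partial>Nm \<partial>Nm)"
    unfolding J_def g_def by (rule PiM2) (simp, measurable)
  also have "\<dots> = (\<integral>\<^sup>+z. ennreal (exp (- z) * Phi z) * indicator {0..} z \<partial>lborel)"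
    by (rule B1[OF Phi_meas Phi_nonneg])
  also have "\<dots> = (\<integral>\<^sup>+z. ennreal (exp (- z) * (1 - exp (- Aa * z)) * (\<Prod>k\<in>{2..N}. hfun Aa (mu k) z)) * indicator {0..} z \<partial>lborel)"
  proof (intro nn_integral_cong_AE, use AE_lborel_singleton[of 0] in eventually_elim)
    fix z :: real assume z: "z \<noteq> 0"
    show "ennreal (exp (- z) * Phi z) * indicator {0..} z =
      ennreal (exp (- z) * (1 - exp (- Aa * z)) * (\<Prod>k\<in>{2..N}. hfun Aa (mu k) z)) * indicator {0..} z"
    proof (cases "z > 0")
      case True
      then have "Phi z = (1 - exp (- Aa * z)) * (\<Prod>k\<in>{2..N}. hfun Aa (mu k) z)" by (simp add: Phi_def)
      then show ?thesis by (simp only: mult.assoc)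
    next
      case False
      then show ?thesis using z by (simp add: indicator_def)
    qed
  qed
  finally have R: "(\<integral>\<^sup>+\<omega>. g (restrict (\<lambda>i. X i \<omega>) J) \<partial>M) =
     (\<integral>\<^sup>+z. ennreal (exp (- z) * (1 - exp (- Aa * z)) * (\<Prod>k\<in>{2..N}. hfun Aa (mu k) z)) * indicator {0..} z \<partial>lborel)" .
  show ?thesis using main unfolding e1 R .
qed

end

lemma prod_indicator_ennreal:
  assumes "finite S"
  shows "(\<Prod>j\<in>S. (indicator A (h j) :: ennreal)) = (if \<forall>j\<in>S. h j \<in> A then 1 else 0)"
proof (cases "\<forall>j\<in>S. h j \<in> A")
  case True then show ?thesis by simp
next
  case False
  then obtain j where "j \<in> S" "h j \<notin> A" by auto
  then have "\<exists>a\<in>S. (indicator A (h a) :: ennreal) = 0" by (auto simp: indicator_def)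
  then show ?thesis using assms False by (simp add: prod_zero)
qed

context fa_setup
begin

lemma target_eq:
  "(\<integral>\<^sup>+z. ennreal (exp (- z) * (1 - exp (- Aa * z)) * (\<Prod>k\<in>{2..N}. hfun Aa (mu k) z)) * indicator {0..} z \<partial>lborel)
   = ennreal (LBINT z:{0..}. exp (- z) * (1 - exp (- Aa * z)) * (\<Prod>k\<in>{2..N}. hfun Aa (mu k) z))"
proof -
  define F where "F z = exp (- z) * (1 - exp (- Aa * z)) * (\<Prod>k\<in>{2..N}. hfun Aa (mu k) z)" for z
  have Fm[measurable]: "F \<in> borel_measurable borel" unfolding F_def hfun_def by measurable
  have Fnn: "0 \<le> F z" if "z \<ge> 0" for z
  proof -
    have "0 \<le> 1 - exp (- Aa * z)" using that Aa_pos by (simp add: mult_nonneg_nonneg)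
    moreover have "0 \<le> (\<Prod>k\<in>{2..N}. hfun Aa (mu k) z)"
      using hfun_bounds(1)[OF mu_sq Aa_pos that] by (intro prod_nonneg) auto
    ultimately show ?thesis unfolding F_def by simp
  qed
  have Fle: "F z \<le> exp (- z) * indicator {0<..} z" if "z \<ge> 0" for z
  proof (cases "z = 0")
    case True then show ?thesis by (simp add: F_def)
  next
    case False
    have "(1 - exp (- Aa * z)) \<le> 1" by simp
    moreover have "(\<Prod>k\<in>{2..N}. hfun Aa (mu k) z) \<le> 1"
      using hfun_bounds[OF mu_sq Aa_pos that] by (intro prod_le_1) auto
    moreover have "0 \<le> 1 - exp (- Aa * z)" using that Aa_pos by (simp add: mult_nonneg_nonneg)
    moreover have "0 \<le> (\<Prod>k\<in>{2..N}. hfun Aa (mu k) z)"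
      using hfun_bounds(1)[OF mu_sq Aa_pos that] by (intro prod_nonneg) auto
    ultimately have "(1 - exp (- Aa * z)) * (\<Prod>k\<in>{2..N}. hfun Aa (mu k) z) \<le> 1 * 1"
      by (intro mult_mono) auto
    then have "F z \<le> exp (- z) * 1" unfolding F_def mult.assoc by (intro mult_left_mono) auto
    then show ?thesis using False that by simp
  qed
  have int: "integrable lborel (\<lambda>z. indicator {0..} z *\<^sub>R F z)"
  proof (rule integrableI_nonneg)
    show "(\<lambda>z. indicator {0..} z *\<^sub>R F z) \<in> borel_measurable lborel" by measurable
    show "AE z in lborel. 0 \<le> indicator {0..} z *\<^sub>R F z"
      by (intro AE_I2) (auto simp: indicator_def Fnn)
    have "(\<integral>\<^sup>+z. ennreal (indicator {0..} z *\<^sub>R F z) \<partial>lborel) \<le>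
          (\<integral>\<^sup>+z. ennreal (exp (- z) * indicator {0<..} z) * indicator {0..} z \<partial>lborel)"
    proof (intro nn_integral_mono)
      fix z :: real
      show "ennreal (indicator {0..} z *\<^sub>R F z) \<le> ennreal (exp (- z) * indicator {0<..} z) * indicator {0..} z"
      proof (cases "z \<ge> 0")
        case True
        then show ?thesis using Fle[OF True] by (simp add: indicator_def ennreal_leI)
      qed (simp add: indicator_def)
    qed
    also have "\<dots> = ennreal (exp (- 0))" by (rule exp_tail) simp
    finally show "(\<integral>\<^sup>+z. ennreal (indicator {0..} z *\<^sub>R F z) \<partial>lborel) < \<infinity>"
      by (simp add: order_le_less_trans)
  qed
  have "(\<integral>\<^sup>+z. ennreal (F z) * indicator {0..} z \<partial>lborel) = (\<integral>\<^sup>+z. ennreal (indicator {0..} z *\<^sub>R F z) \<partial>lborel)"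
    by (intro nn_integral_cong) (simp add: indicator_def)
  also have "\<dots> = ennreal (integral\<^sup>L lborel (\<lambda>z. indicator {0..} z *\<^sub>R F z))"
    by (rule nn_integral_eq_integral[OF int]) (intro AE_I2, auto simp: indicator_def Fnn)
  also have "\<dots> = ennreal (LBINT z:{0..}. F z)" by (simp add: set_lebesgue_integral_def)
  finally show ?thesis unfolding F_def .
qed

lemma ratio_port:
  "(cmod (fa_chan N W \<sigma> (\<lambda>i. G 0 i \<omega>) (\<lambda>i. G 1 i \<omega>) k))\<^sup>2 / (cmod (fa_chan N W \<sigma>I (\<lambda>i. G 2 i \<omega>) (\<lambda>i. G 3 i \<omega>) k))\<^sup>2
   = (if k = 1 then r1 (\<lambda>i. X i \<omega>) else rk k (\<lambda>i. X i \<omega>))"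
  unfolding fa_chan_def r1_def rk_def ratio_def mu_def by simp

lemma main_result:
  shows "let x = G 0; y = G 1; xI = G 2; yI = G 3;
             g = (\<lambda>\<omega> k. fa_chan N W \<sigma> (\<lambda>i. x i \<omega>) (\<lambda>i. y i \<omega>) k);
             gI = (\<lambda>\<omega> k. fa_chan N W \<sigma>I (\<lambda>i. xI i \<omega>) (\<lambda>i. yI i \<omega>) k);
             SIR = (\<lambda>\<omega>. Max ((\<lambda>k. (cmod (g \<omega> k))\<^sup>2 / (cmod (gI \<omega> k))\<^sup>2) ` {1..N}));
             a = \<sigma>I\<^sup>2 * \<gamma> / \<sigma>\<^sup>2;
             \<mu> = fa_mu N W
         in measure M {\<omega> \<in> space M. SIR \<omega> \<le> \<gamma>}
            \<le> (LBINT z:{0..}. exp (- z) * (1 - exp (- a * z)) *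
                  (\<Prod>k\<in>{2..N}. 1 - 1 / (a + 1) *
                     exp (- (1 / (a + 1)) * ((\<mu> k)\<^sup>2 / (1 - (\<mu> k)\<^sup>2)) * a * z) /
                     (1 + 4 / (a + 1) * ((\<mu> k)\<^sup>2 / (1 - (\<mu> k)\<^sup>2)) * a * z)))"
proof -
  define SIR where "SIR \<omega> = Max ((\<lambda>k. (cmod (fa_chan N W \<sigma> (\<lambda>i. G 0 i \<omega>) (\<lambda>i. G 1 i \<omega>) k))\<^sup>2 /
     (cmod (fa_chan N W \<sigma>I (\<lambda>i. G 2 i \<omega>) (\<lambda>i. G 3 i \<omega>) k))\<^sup>2) ` {1..N})" for \<omega>
  define E where "E = {\<omega> \<in> space M. SIR \<omega> \<le> \<gamma>}"
  define RHS where "RHS = (LBINT z:{0..}. exp (- z) * (1 - exp (- Aa * z)) * (\<Prod>k\<in>{2..N}. hfun Aa (mu k) z))"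
  have SIR_iff: "SIR \<omega> \<le> \<gamma> \<longleftrightarrow> Psi {2..N} {} (\<lambda>i. X i \<omega>) = 1" for \<omega>
  proof -
    have ne: "{1..N} \<noteq> {}" using N2 by simp
    have "SIR \<omega> \<le> \<gamma> \<longleftrightarrow> (\<forall>k\<in>{1..N}. (if k = 1 then r1 (\<lambda>i. X i \<omega>) else rk k (\<lambda>i. X i \<omega>)) \<le> \<gamma>)"
    proof -
      have "SIR \<omega> \<le> \<gamma> \<longleftrightarrow> (\<forall>k\<in>{1..N}. (cmod (fa_chan N W \<sigma> (\<lambda>i. G 0 i \<omega>) (\<lambda>i. G 1 i \<omega>) k))\<^sup>2 /
          (cmod (fa_chan N W \<sigma>I (\<lambda>i. G 2 i \<omega>) (\<lambda>i. G 3 i \<omega>) k))\<^sup>2 \<le> \<gamma>)"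
        unfolding SIR_def by (subst Max_le_iff) (use ne in auto)
      then show ?thesis unfolding ratio_port .
    qed
    also have "\<dots> \<longleftrightarrow> r1 (\<lambda>i. X i \<omega>) \<le> \<gamma> \<and> (\<forall>k\<in>{2..N}. rk k (\<lambda>i. X i \<omega>) \<le> \<gamma>)"
    proof -
      have eq: "{1..N} = insert 1 {2..N}" using N2 by auto
      have "\<forall>k\<in>{2..N}. k \<noteq> (1::nat)" by auto
      then show ?thesis unfolding eq by auto
    qed
    also have "\<dots> \<longleftrightarrow> Psi {2..N} {} (\<lambda>i. X i \<omega>) = 1"
      unfolding Psi_def prod_indicator_ennreal[OF finite_atLeastAtMost] by (simp add: indicator_def)
    finally show ?thesis .
  qed
  have Em: "E \<in> sets M"
  proof -
    have Pm: "Psi {2..N} {} \<in> borel_measurable (PiM II (\<lambda>_. borel))"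
      by (rule Psi_meas) (use N2 in auto)
    have "(\<lambda>\<omega>. Psi {2..N} {} (restrict (\<lambda>i. X i \<omega>) II)) \<in> borel_measurable M"
      by (rule measurable_comp[OF meas_restrict[OF order_refl] Pm, unfolded comp_def])
    then have "{\<omega> \<in> space M. Psi {2..N} {} (restrict (\<lambda>i. X i \<omega>) II) = 1} \<in> sets M"
      by measurable
    moreover have "Psi {2..N} {} (restrict (\<lambda>i. X i \<omega>) II) = Psi {2..N} {} (\<lambda>i. X i \<omega>)" for \<omega>
      by (rule Psi_dep) (use N2 in auto)
    ultimately show ?thesis unfolding E_def SIR_iff by simp
  qed
  have "emeasure M E = (\<integral>\<^sup>+\<omega>. indicator E \<omega> \<partial>M)" using Em by simp
  also have "\<dots> = (\<integral>\<^sup>+\<omega>. Psi {2..N} ({2..N} - {2..N}) (\<lambda>i. X i \<omega>) \<partial>M)"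
  proof (intro nn_integral_cong)
    fix \<omega> assume "\<omega> \<in> space M"
    moreover have "Psi {2..N} {} (\<lambda>i. X i \<omega>) = 0 \<or> Psi {2..N} {} (\<lambda>i. X i \<omega>) = 1"
      unfolding Psi_def prod_indicator_ennreal[OF finite_atLeastAtMost] by (simp add: indicator_def)
    ultimately show "indicator E \<omega> = Psi {2..N} ({2..N} - {2..N}) (\<lambda>i. X i \<omega>)"
      unfolding E_def using SIR_iff[of \<omega>] by (auto simp: indicator_def)
  qed
  also have "\<dots> \<le> (\<integral>\<^sup>+\<omega>. Psi {} {2..N} (\<lambda>i. X i \<omega>) \<partial>M)" by (rule chain) simp
  also have "\<dots> \<le> ennreal RHS" unfolding RHS_def target_eq[symmetric] by (rule final_bound)
  finally have le: "emeasure M E \<le> ennreal RHS" .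
  have RHS0: "0 \<le> RHS"
  proof -
    have "ennreal RHS \<ge> emeasure M E" by (rule le)
    show ?thesis unfolding RHS_def set_lebesgue_integral_def
    proof (rule integral_nonneg_AE, intro AE_I2)
      fix z :: real
      show "0 \<le> indicator {0..} z *\<^sub>R (exp (- z) * (1 - exp (- Aa * z)) * (\<Prod>k\<in>{2..N}. hfun Aa (mu k) z))"
      proof (cases "z \<ge> 0")
        case True
        have "0 \<le> 1 - exp (- Aa * z)" using True Aa_pos by (simp add: mult_nonneg_nonneg)
        moreover have "0 \<le> (\<Prod>k\<in>{2..N}. hfun Aa (mu k) z)"
          using hfun_bounds(1)[OF mu_sq Aa_pos True] by (intro prod_nonneg) auto
        ultimately show ?thesis using True by simp
      qed (simp add: indicator_def)
    qed
  qed
  have "measure M E \<le> RHS"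
    using le RHS0 by (simp add: emeasure_eq_measure)
  then show ?thesis unfolding Let_def SIR_def[symmetric] E_def[symmetric] RHS_def hfun_def Aa_def mu_def .
qed

end

theorem theorem2:
  fixes M :: "'a measure"
    and N :: nat and W \<sigma> \<sigma>I \<gamma> :: real
    and G :: "nat \<Rightarrow> nat \<Rightarrow> 'a \<Rightarrow> real"
  assumes "prob_space M"
    and "N \<ge> 2" and "W > 0" and "\<sigma> > 0" and "\<sigma>I > 0" and "\<gamma> > 0"
    and indep: "prob_space.indep_vars M (\<lambda>_. borel) (\<lambda>(t, i). G t i) ({..<4} \<times> {0..N})"
    and gauss: "\<And>t i. t < 4 \<Longrightarrow> i \<le> N \<Longrightarrow>
                  distributed M lborel (G t i) (normal_density 0 (sqrt (1/2)))"
  shows "let x = G 0; y = G 1; xI = G 2; yI = G 3;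
             g = (\<lambda>\<omega> k. fa_chan N W \<sigma> (\<lambda>i. x i \<omega>) (\<lambda>i. y i \<omega>) k);
             gI = (\<lambda>\<omega> k. fa_chan N W \<sigma>I (\<lambda>i. xI i \<omega>) (\<lambda>i. yI i \<omega>) k);
             SIR = (\<lambda>\<omega>. Max ((\<lambda>k. (cmod (g \<omega> k))\<^sup>2 / (cmod (gI \<omega> k))\<^sup>2) ` {1..N}));
             a = \<sigma>I\<^sup>2 * \<gamma> / \<sigma>\<^sup>2;
             \<mu> = fa_mu N W
         in measure M {\<omega> \<in> space M. SIR \<omega> \<le> \<gamma>}
            \<le> (LBINT z:{0..}. exp (- z) * (1 - exp (- a * z)) *
                  (\<Prod>k\<in>{2..N}. 1 - 1 / (a + 1) *
                     exp (- (1 / (a + 1)) * ((\<mu> k)\<^sup>2 / (1 - (\<mu> k)\<^sup>2)) * a * z) /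
                     (1 + 4 / (a + 1) * ((\<mu> k)\<^sup>2 / (1 - (\<mu> k)\<^sup>2)) * a * z)))"
proof -
  interpret fa_setup M N W \<sigma> \<sigma>I \<gamma> G
    using assms unfolding fa_setup_def by blast
  show ?thesis by (rule main_result)
qed

end
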